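(* Let $\Gamma$ be a non-abelian $2$-generated finite $p$-group ($p$ odd) with cyclic derived subgroup and $\mathrm{inv}(\Gamma)=(p,m,n_1,n_2,o_1,o_2,o'_1,o'_2,u_1,u_2)$, satisfying $o_1\ne o_2$, $0<\max(o'_1,o'_2)<m$ and $n_2\ge2$. Then the natural projection $$\Delta_\Gamma:\frac{\mathcal I(\Gamma')k\Gamma}{\mathcal I(\Gamma')\mathcal I(\Gamma)}\to\frac{\mathcal I(\Gamma')k\Gamma+\mathcal I(\Gamma)^3}{\mathcal I(\Gamma)^3},\quad x+\mathcal I(\Gamma')\mathcal I(\Gamma)\mapsto x+\mathcal I(\Gamma)^3,$$ is a well-defined isomorphism of $k$-vector spaces (both spaces being one-dimensional).
   Context: $k=\mathbb F_p$, $\mathcal I(X)$ is the augmentation ideal of $kX$, $\Gamma'$ the derived subgroup. For a list $I=(p,m,n_1,n_2,o_1,o_2,o'_1,o'_2,u_1,u_2)$ of non-negative integers let $\mathcal G_I=\langle b_1,b_2 \mid a=[b_2,b_1],\ a^{p^m}=1,\ a^{b_i}=a^{r_i},\ b_i^{p^{n_i}}=a^{u_ip^{m-o'_i}}\ (i=1,2)\rangle$, where $[g,h]=g^{-1}h^{-1}gh$, $a^{b}=b^{-1}ab$, $r_1=1+p^{m-o_1}$, and $r_2=1+p^{m-o_2}$ if $o_2>o_1$, $r_2=r_1^{p^{o_1-o_2}}$ otherwise. By a known classification, for every non-abelian $2$-generated finite $p$-group $\Gamma$ with cyclic derived subgroup there is a unique such list $I$ satisfying conditions (I)–(VI) below with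 $\Gamma\cong\mathcal G_I$; it is denoted $\mathrm{inv}(\Gamma)$. (I) $n_1\ge n_2\ge1$. (II) $0\le o_i<\min(m,n_i)$, $0\le o'_i\le m-o_i$ and $p\nmid u_i$ for $i=1,2$. (III) One of: (a) $o_1=0$ and $o'_1\le o'_2\le o'_1+o_2+n_1-n_2$; (b) $o_2=0<o_1$, $n_2<n_1$ and $o'_1+\min(0,n_1-n_2-o_1)\le o'_2\le o'_1+n_1-n_2$; (c) $0<o_2<o_1<o_2+n_1-n_2$ and $o'_1\le o'_2\le o'_1+n_1-n_2$. (IV) $o_2+o'_1\le m\le n_1$ and one of: (a) $o_1+o'_2\le m\le n_2$; (b) $2m-o_1-o'_2=n_2<m$ and $u_2\equiv1 \pmod{p^{m-n_2}}$. (V) $1\le u_1\le p^{a_1}$, where $a_1=\min(o'_1,\ o_2+\min(n_1-n_2+o'_1-o'_2,0))$. (VI) One of: (a) $1\le u_2\le p^{a_2}$; (b) $o_1o_2\ne0$, $n_1-n_2+o'_1-o'_2=0<a_1$, $1+p^{a_2}\le u_2\le 2p^{a_2}$ and $u_1\equiv1\pmod p$; where $a_2=0$ if $o_1=0$; $a_2=\min(o_1,\,o'_2,\,o'_2-o'_1+\max(0,o_1+n_2-n_1))$ if $o_2=0<o_1$; and $a_2=\min(o_1-o_2,\,o'_2-o'_1)$ otherwise. *)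

theory Defs
  imports "HOL-Algebra.Algebra"
begin

definition commut :: "('a, 'b) monoid_scheme \<Rightarrow> 'a \<Rightarrow> 'a \<Rightarrow> 'a" where
  "commut G g h = inv\<^bsub>G\<^esub> g \<otimes>\<^bsub>G\<^esub> inv\<^bsub>G\<^esub> h \<otimes>\<^bsub>G\<^esub> g \<otimes>\<^bsub>G\<^esub> h"

definition conjg :: "('a, 'b) monoid_scheme \<Rightarrow> 'a \<Rightarrow> 'a \<Rightarrow> 'a" where
  "conjg G a b = inv\<^bsub>G\<^esub> b \<otimes>\<^bsub>G\<^esub> a \<otimes>\<^bsub>G\<^esub> b"

definition is_p_group :: "nat \<Rightarrow> ('a, 'b) monoid_scheme \<Rightarrow> bool" where
  "is_p_group p G \<longleftrightarrow> group G \<and> finite (carrier G) \<and> (\<exists>n. card (carrier G) = p ^ n)"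

definition two_generated :: "('a, 'b) monoid_scheme \<Rightarrow> bool" where
  "two_generated G \<longleftrightarrow> (\<exists>x\<in>carrier G. \<exists>y\<in>carrier G. generate G {x, y} = carrier G)"

definition cyclic_subgroup :: "('a, 'b) monoid_scheme \<Rightarrow> 'a set \<Rightarrow> bool" where
  "cyclic_subgroup G H \<longleftrightarrow> (\<exists>g\<in>H. H = generate G {g})"

definition r1_of :: "nat \<Rightarrow> nat \<Rightarrow> nat \<Rightarrow> nat" where
  "r1_of p m o1 = 1 + p ^ (m - o1)"

definition r2_of :: "nat \<Rightarrow> nat \<Rightarrow> nat \<Rightarrow> nat \<Rightarrow> nat" where
  "r2_of p m o1 o2 = (if o2 > o1 then 1 + p ^ (m - o2) else (r1_of p m o1) ^ (p ^ (o1 - o2)))"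

definition pres_rel ::
  "nat \<Rightarrow> nat \<Rightarrow> nat \<Rightarrow> nat \<Rightarrow> nat \<Rightarrow> nat \<Rightarrow> nat \<Rightarrow> nat \<Rightarrow> nat \<Rightarrow> nat
   \<Rightarrow> ('c, 'd) monoid_scheme \<Rightarrow> 'c \<Rightarrow> 'c \<Rightarrow> bool" where
  "pres_rel p m n1 n2 o1 o2 o1' o2' u1 u2 H b1 b2 \<longleftrightarrow>
     b1 \<in> carrier H \<and> b2 \<in> carrier H \<and>
     (let a = commut H b2 b1 in
        a [^]\<^bsub>H\<^esub> (p ^ m) = \<one>\<^bsub>H\<^esub> \<and>
        conjg H a b1 = a [^]\<^bsub>H\<^esub> r1_of p m o1 \<and>
        conjg H a b2 = a [^]\<^bsub>H\<^esub> r2_of p m o1 o2 \<and>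
        b1 [^]\<^bsub>H\<^esub> (p ^ n1) = a [^]\<^bsub>H\<^esub> (u1 * p ^ (m - o1')) \<and>
        b2 [^]\<^bsub>H\<^esub> (p ^ n2) = a [^]\<^bsub>H\<^esub> (u2 * p ^ (m - o2')))"

text \<open>G is isomorphic to the finitely presented group G_I, with b1, b2 corresponding to the
  generators: G is generated by b1, b2, these satisfy the relations, and the universal property
  of the presentation holds (tested against all groups whose carrier is a set of naturals; since
  G_I is countable this is equivalent to G being isomorphic to G_I).\<close>
definition is_presented_by ::
  "nat \<Rightarrow> nat \<Rightarrow> nat \<Rightarrow> nat \<Rightarrow> nat \<Rightarrow> nat \<Rightarrow> nat \<Rightarrow> nat \<Rightarrow> nat \<Rightarrow> nat
   \<Rightarrow> ('a, 'b) monoid_scheme \<Rightarrow> bool" where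
  "is_presented_by p m n1 n2 o1 o2 o1' o2' u1 u2 G \<longleftrightarrow>
     group G \<and>
     (\<exists>b1 b2. pres_rel p m n1 n2 o1 o2 o1' o2' u1 u2 G b1 b2 \<and>
        generate G {b1, b2} = carrier G \<and>
        (\<forall>(H :: nat monoid) h1 h2. group H \<and> pres_rel p m n1 n2 o1 o2 o1' o2' u1 u2 H h1 h2
           \<longrightarrow> (\<exists>\<phi>\<in>hom G H. \<phi> b1 = h1 \<and> \<phi> b2 = h2)))"

text \<open>Conditions (I)-(VI) of the classification, with all quantities read as integers.\<close>
definition a1_of :: "int \<Rightarrow> int \<Rightarrow> int \<Rightarrow> int \<Rightarrow> int \<Rightarrow> int" where
  "a1_of n1 n2 o2 o1' o2' = min o1' (o2 + min (n1 - n2 + o1' - o2') 0)"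

definition a2_of :: "int \<Rightarrow> int \<Rightarrow> int \<Rightarrow> int \<Rightarrow> int \<Rightarrow> int \<Rightarrow> int" where
  "a2_of n1 n2 o1 o2 o1' o2' =
     (if o1 = 0 then 0
      else if o2 = 0 then min o1 (min o2' (o2' - o1' + max 0 (o1 + n2 - n1)))
      else min (o1 - o2) (o2' - o1'))"

definition inv_conditions ::
  "nat \<Rightarrow> nat \<Rightarrow> nat \<Rightarrow> nat \<Rightarrow> nat \<Rightarrow> nat \<Rightarrow> nat \<Rightarrow> nat \<Rightarrow> nat \<Rightarrow> nat \<Rightarrow> bool" where
  "inv_conditions p' m' n1' n2' o1n o2n o1'n o2'n u1n u2n \<longleftrightarrow>
    (let p = int p'; m = int m'; n1 = int n1'; n2 = int n2'; o1 = int o1n; o2 = int o2n;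
         o1' = int o1'n; o2' = int o2'n; u1 = int u1n; u2 = int u2n;
         a1 = a1_of n1 n2 o2 o1' o2'; a2 = a2_of n1 n2 o1 o2 o1' o2' in
     \<comment> \<open>(I)\<close>
     n1 \<ge> n2 \<and> n2 \<ge> 1 \<and>
     \<comment> \<open>(II)\<close>
     (0 \<le> o1 \<and> o1 < min m n1 \<and> 0 \<le> o1' \<and> o1' \<le> m - o1 \<and> \<not> p dvd u1) \<and>
     (0 \<le> o2 \<and> o2 < min m n2 \<and> 0 \<le> o2' \<and> o2' \<le> m - o2 \<and> \<not> p dvd u2) \<and>
     \<comment> \<open>(III)\<close>
     ((o1 = 0 \<and> o1' \<le> o2' \<and> o2' \<le> o1' + o2 + n1 - n2) \<or>
      (o2 = 0 \<and> 0 < o1 \<and> n2 < n1 \<and> o1' + min 0 (n1 - n2 - o1) \<le> o2' \<and> o2' \<le> o1' + n1 - n2) \<or>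
      (0 < o2 \<and> o2 < o1 \<and> o1 < o2 + n1 - n2 \<and> o1' \<le> o2' \<and> o2' \<le> o1' + n1 - n2)) \<and>
     \<comment> \<open>(IV)\<close>
     (o2 + o1' \<le> m \<and> m \<le> n1 \<and>
      ((o1 + o2' \<le> m \<and> m \<le> n2) \<or>
       (2 * m - o1 - o2' = n2 \<and> n2 < m \<and> u2 mod (p ^ nat (m - n2)) = 1 mod (p ^ nat (m - n2))))) \<and>
     \<comment> \<open>(V): 1 \<le> u1 \<le> p^a1 (impossible when a1 < 0)\<close>
     (0 \<le> a1 \<and> 1 \<le> u1 \<and> u1 \<le> p ^ nat a1) \<and>
     \<comment> \<open>(VI)\<close>
     ((0 \<le> a2 \<and> 1 \<le> u2 \<and> u2 \<le> p ^ nat a2) \<or>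
      (o1 * o2 \<noteq> 0 \<and> n1 - n2 + o1' - o2' = 0 \<and> 0 < a1 \<and>
       0 \<le> a2 \<and> 1 + p ^ nat a2 \<le> u2 \<and> u2 \<le> 2 * p ^ nat a2 \<and> u1 mod p = 1 mod p)))"

definition grp_alg :: "('a, 'b) monoid_scheme \<Rightarrow> ('a \<Rightarrow> 'k::field) set" where
  "grp_alg G = {f. \<forall>x. x \<notin> carrier G \<longrightarrow> f x = 0}"

definition ga_add :: "('a \<Rightarrow> 'k::field) \<Rightarrow> ('a \<Rightarrow> 'k) \<Rightarrow> ('a \<Rightarrow> 'k)" where
  "ga_add f g = (\<lambda>x. f x + g x)"

definition ga_mult :: "('a, 'b) monoid_scheme \<Rightarrow> ('a \<Rightarrow> 'k::field) \<Rightarrow> ('a \<Rightarrow> 'k) \<Rightarrow> ('a \<Rightarrow> 'k)" where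
  "ga_mult G f g = (\<lambda>x. if x \<in> carrier G
      then (\<Sum>y\<in>carrier G. f y * g (inv\<^bsub>G\<^esub> y \<otimes>\<^bsub>G\<^esub> x)) else 0)"

definition aug_ideal :: "('a, 'b) monoid_scheme \<Rightarrow> 'a set \<Rightarrow> ('a \<Rightarrow> 'k::field) set" where
  "aug_ideal G H = {f \<in> grp_alg G. (\<forall>x. x \<notin> H \<longrightarrow> f x = 0) \<and> (\<Sum>x\<in>H. f x) = 0}"

definition set_mult ::
  "('a, 'b) monoid_scheme \<Rightarrow> ('a \<Rightarrow> 'k::field) set \<Rightarrow> ('a \<Rightarrow> 'k) set \<Rightarrow> ('a \<Rightarrow> 'k) set" where
  "set_mult G A B = {(\<lambda>x. \<Sum>i<n. ga_mult G (f i) (g i) x) | (n::nat) f g. \<forall>i<n. f i \<in> A \<and> g i \<in> B}"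

definition set_add :: "('a \<Rightarrow> 'k::field) set \<Rightarrow> ('a \<Rightarrow> 'k) set \<Rightarrow> ('a \<Rightarrow> 'k) set" where
  "set_add A B = {ga_add f g | f g. f \<in> A \<and> g \<in> B}"

definition coset_of :: "('a \<Rightarrow> 'k::field) \<Rightarrow> ('a \<Rightarrow> 'k) set \<Rightarrow> ('a \<Rightarrow> 'k) set" where
  "coset_of x B = {ga_add x y | y. y \<in> B}"

definition quot_sp :: "('a \<Rightarrow> 'k::field) set \<Rightarrow> ('a \<Rightarrow> 'k) set \<Rightarrow> ('a \<Rightarrow> 'k) set set" where
  "quot_sp A B = (\<lambda>x. coset_of x B) ` A"

definition nat_proj_welldef :: "('a \<Rightarrow> 'k::field) set \<Rightarrow> ('a \<Rightarrow> 'k) set \<Rightarrow> ('a \<Rightarrow> 'k) set \<Rightarrow> bool" where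
  "nat_proj_welldef A B D \<longleftrightarrow>
     (\<forall>x\<in>A. \<forall>y\<in>A. coset_of x B = coset_of y B \<longrightarrow> coset_of x D = coset_of y D)"

definition nat_proj ::
  "('a \<Rightarrow> 'k::field) set \<Rightarrow> ('a \<Rightarrow> 'k) set \<Rightarrow> ('a \<Rightarrow> 'k) set \<Rightarrow> ('a \<Rightarrow> 'k) set \<Rightarrow> ('a \<Rightarrow> 'k) set" where
  "nat_proj A B D Y = coset_of (SOME z. z \<in> A \<and> Y = coset_of z B) D"

end

theory Submission
  imports Defs "HOL-Library.Nat_Bijection"
begin


definition hmul :: "int \<Rightarrow> int\<times>int\<times>int \<Rightarrow> int\<times>int\<times>int \<Rightarrow> int\<times>int\<times>int" where
  "hmul p t s = (case t of (x,y,z) \<Rightarrow> case s of (x',y',z') \<Rightarrow>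
      ((x+x') mod p, (y+y') mod p, (z+z'+x*y') mod p))"

definition hT :: "int \<Rightarrow> (int\<times>int\<times>int) set" where
  "hT p = {(x,y,z). 0 \<le> x \<and> x < p \<and> 0 \<le> y \<and> y < p \<and> 0 \<le> z \<and> z < p}"

definition henc :: "int\<times>int\<times>int \<Rightarrow> nat" where
  "henc t = (case t of (x,y,z) \<Rightarrow> prod_encode (nat x, prod_encode (nat y, nat z)))"

definition hdec :: "nat \<Rightarrow> int\<times>int\<times>int" where
  "hdec n = (case prod_decode n of (a, r) \<Rightarrow> case prod_decode r of (b, c) \<Rightarrow> (int a, int b, int c))"

lemma hdec_henc: "t \<in> hT p \<Longrightarrow> hdec (henc t) = t"
  by (auto simp: hdec_def henc_def hT_def)

definition Heis :: "int \<Rightarrow> nat monoid" where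
  "Heis p = \<lparr>carrier = henc ` hT p, monoid.mult = (\<lambda>a b. henc (hmul p (hdec a) (hdec b))), one = henc (0,0,0)\<rparr>"

lemma hmul_hT: "p > 0 \<Longrightarrow> hmul p t s \<in> hT p"
  by (cases t; cases s) (auto simp: hmul_def hT_def)

lemma mod3a: "(A mod p + B + C mod p * D) mod (p::int) = (A + B + C * D) mod p"
  by (metis (no_types) mod_add_eq mod_add_left_eq mod_mult_left_eq)
lemma mod3b: "(A + B mod p + C * (D mod p)) mod (p::int) = (A + B + C * D) mod p"
  by (metis (no_types) mod_add_eq mod_add_right_eq mod_mult_right_eq)

lemma hdec_henc_hmul: "p > 0 \<Longrightarrow> hdec (henc (hmul p s t)) = hmul p s t"
  using hdec_henc hmul_hT by blast

lemma hmul_assoc: "hmul p (hmul p a b) c = hmul p a (hmul p b c)"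
proof -
  obtain x y z where a: "a = (x,y,z)" by (cases a) auto
  obtain x' y' z' where b: "b = (x',y',z')" by (cases b) auto
  obtain x'' y'' z'' where c: "c = (x'',y'',z'')" by (cases c) auto
  have 1: "((x + x') mod p + x'') mod p = (x + (x' + x'') mod p) mod p"
    by (simp add: mod_simps add.assoc)
  have 2: "((y + y') mod p + y'') mod p = (y + (y' + y'') mod p) mod p"
    by (simp add: mod_simps add.assoc)
  have 3: "((z + z' + x * y') mod p + z'' + (x + x') mod p * y'') mod p =
      (z + (z' + z'' + x' * y'') mod p + x * ((y' + y'') mod p)) mod p"
  proof -
    have "((z + z' + x * y') mod p + z'' + (x + x') mod p * y'') mod p = (z + z' + x * y' + z'' + (x + x') * y'') mod p"
      by (rule mod3a)
    also have "\<dots> = (z + (z' + z'' + x' * y'') + x * (y' + y'')) mod p" by (simp add: algebra_simps)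
    also have "\<dots> = (z + (z' + z'' + x' * y'') mod p + x * ((y' + y'') mod p)) mod p"
      by (rule mod3b[symmetric])
    finally show ?thesis .
  qed
  show ?thesis using 1 2 3 by (simp add: a b c hmul_def)
qed

lemma Heis_mult: "s \<in> hT p \<Longrightarrow> t \<in> hT p \<Longrightarrow> henc s \<otimes>\<^bsub>Heis p\<^esub> henc t = henc (hmul p s t)"
  by (simp add: Heis_def hdec_henc)

lemma Heis_group: assumes "p > 1" shows "group (Heis p)"
proof (rule groupI)
  have z: "(0,0,0) \<in> hT p" using assms by (simp add: hT_def)
  show "\<one>\<^bsub>Heis p\<^esub> \<in> carrier (Heis p)" using z by (simp add: Heis_def)
  fix x y assume "x \<in> carrier (Heis p)" "y \<in> carrier (Heis p)"
  then show "x \<otimes>\<^bsub>Heis p\<^esub> y \<in> carrier (Heis p)" using assms hmul_hT by (auto simp: Heis_def)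
next
  fix x y z assume "x \<in> carrier (Heis p)" "y \<in> carrier (Heis p)" "z \<in> carrier (Heis p)"
  then show "x \<otimes>\<^bsub>Heis p\<^esub> y \<otimes>\<^bsub>Heis p\<^esub> z = x \<otimes>\<^bsub>Heis p\<^esub> (y \<otimes>\<^bsub>Heis p\<^esub> z)"
    using assms by (auto simp: Heis_def hdec_henc hdec_henc_hmul hmul_assoc)
next
  fix x assume "x \<in> carrier (Heis p)"
  then obtain a b c where x: "x = henc (a,b,c)" "(a,b,c) \<in> hT p" by (auto simp: Heis_def)
  have z: "(0,0,0) \<in> hT p" using assms by (simp add: hT_def)
  show "\<one>\<^bsub>Heis p\<^esub> \<otimes>\<^bsub>Heis p\<^esub> x = x"
    using x z hdec_henc[OF x(2)] hdec_henc[OF z] by (simp add: Heis_def hmul_def hT_def)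
  let ?y = "((-a) mod p, (-b) mod p, (-c - ((-a) mod p) * b) mod p)"
  have yT: "?y \<in> hT p" using assms by (simp add: hT_def)
  have "\<And>t. ((- c - t * b) mod p + c + t * b) mod p = 0"
    by (metis add.assoc mod_add_left_eq diff_add_cancel mod_0 add.commute add_uminus_conv_diff diff_minus_eq_add minus_diff_eq neg_eq_iff_add_eq_0)
  then have "hmul p ?y (a,b,c) = (0,0,0)"
    by (simp add: hmul_def mod_simps)
  then show "\<exists>y\<in>carrier (Heis p). y \<otimes>\<^bsub>Heis p\<^esub> x = \<one>\<^bsub>Heis p\<^esub>"
    using yT x by (intro bexI[of _ "henc ?y"]) (auto simp: Heis_def hdec_henc)
qed

lemma hT_mem: "0 \<le> x \<Longrightarrow> x < q \<Longrightarrow> 0 \<le> y \<Longrightarrow> y < q \<Longrightarrow> 0 \<le> z \<Longrightarrow> z < q \<Longrightarrow> (x,y,z) \<in> hT q"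
  by (simp add: hT_def)

lemma Heis_carr: "t \<in> hT q \<Longrightarrow> henc t \<in> carrier (Heis q)"
  by (simp add: Heis_def)

lemma Heis_one: "\<one>\<^bsub>Heis q\<^esub> = henc (0,0,0)"
  by (simp add: Heis_def)

lemma Heis_pow1: assumes "q > 1" shows "henc (1,0,0) [^]\<^bsub>Heis q\<^esub> (n::nat) = henc (int n mod q, 0, 0)"
proof (induction n)
  case 0 then show ?case using assms by (simp add: Heis_one)
next
  case (Suc n)
  have "henc (int n mod q, 0, 0) \<otimes>\<^bsub>Heis q\<^esub> henc (1,0,0) = henc (hmul q (int n mod q, 0, 0) (1,0,0))"
    using assms by (intro Heis_mult hT_mem) auto
  also have "\<dots> = henc (int (Suc n) mod q, 0, 0)"
    by (simp add: hmul_def mod_simps add.commute)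
  finally show ?case using Suc by simp
qed

lemma Heis_pow2: assumes "q > 1" shows "henc (0,1,0) [^]\<^bsub>Heis q\<^esub> (n::nat) = henc (0, int n mod q, 0)"
proof (induction n)
  case 0 then show ?case using assms by (simp add: Heis_one)
next
  case (Suc n)
  have "henc (0, int n mod q, 0) \<otimes>\<^bsub>Heis q\<^esub> henc (0,1,0) = henc (hmul q (0, int n mod q, 0) (0,1,0))"
    using assms by (intro Heis_mult hT_mem) auto
  also have "\<dots> = henc (0, int (Suc n) mod q, 0)"
    by (simp add: hmul_def mod_simps add.commute)
  finally show ?case using Suc by simp
qed

lemma Heis_pow3: assumes "q > 1" shows "henc (0,0,q-1) [^]\<^bsub>Heis q\<^esub> (n::nat) = henc (0, 0, ((q-1) * int n) mod q)"
proof (induction n)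
  case 0 then show ?case using assms by (simp add: Heis_one)
next
  case (Suc n)
  have "henc (0, 0, ((q-1) * int n) mod q) \<otimes>\<^bsub>Heis q\<^esub> henc (0,0,q-1) = henc (hmul q (0, 0, ((q-1) * int n) mod q) (0,0,q-1))"
    using assms by (intro Heis_mult hT_mem) auto
  also have "\<dots> = henc (0, 0, ((q-1) * int (Suc n)) mod q)"
  proof -
    have "(((q-1) * int n) mod q + (q-1) + 0 * 0) mod q = ((q-1) * int n + (q-1)) mod q"
      by (simp add: mod_add_left_eq)
    also have "\<dots> = ((q-1) * int (Suc n)) mod q" by (simp add: algebra_simps)
    finally show ?thesis by (simp add: hmul_def)
  qed
  finally show ?case using Suc by simp
qed

lemma Heis_inv1: assumes "q > 1" shows "inv\<^bsub>Heis q\<^esub> henc (1,0,0) = henc (q-1,0,0)"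
proof -
  interpret group "Heis q" using Heis_group assms .
  have "henc (q-1,0,0) \<otimes>\<^bsub>Heis q\<^esub> henc (1,0,0) = henc (hmul q (q-1,0,0) (1,0,0))"
    using assms by (intro Heis_mult hT_mem) auto
  also have "\<dots> = \<one>\<^bsub>Heis q\<^esub>" by (simp add: hmul_def Heis_one)
  finally show ?thesis using assms by (intro inv_equality Heis_carr hT_mem) auto
qed

lemma Heis_inv2: assumes "q > 1" shows "inv\<^bsub>Heis q\<^esub> henc (0,1,0) = henc (0,q-1,0)"
proof -
  interpret group "Heis q" using Heis_group assms .
  have "henc (0,q-1,0) \<otimes>\<^bsub>Heis q\<^esub> henc (0,1,0) = henc (hmul q (0,q-1,0) (0,1,0))"
    using assms by (intro Heis_mult hT_mem) auto
  also have "\<dots> = \<one>\<^bsub>Heis q\<^esub>" by (simp add: hmul_def Heis_one)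
  finally show ?thesis using assms by (intro inv_equality Heis_carr hT_mem) auto
qed

lemma m1q: "(q::int) > 1 \<Longrightarrow> (-1) mod q = q - 1"
  by (simp add: zmod_minus1)

lemma Heis_commut: assumes "q > 1" shows "commut (Heis q) (henc (0,1,0)) (henc (1,0,0)) = henc (0,0,q-1)"
proof -
  have s: "0 \<le> q - 1" "q - 1 < q" using assms by auto
  show ?thesis
    unfolding commut_def Heis_inv1[OF assms] Heis_inv2[OF assms]
    using assms s by (simp add: Heis_mult hT_mem hmul_def m1q)
qed

lemma Heis_conj1: assumes "q > 1" shows "conjg (Heis q) (henc (0,0,q-1)) (henc (1,0,0)) = henc (0,0,q-1)"
proof -
  have s: "0 \<le> q - 1" "q - 1 < q" using assms by auto
  show ?thesis
    unfolding conjg_def Heis_inv1[OF assms]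
    using assms s by (simp add: Heis_mult hT_mem hmul_def m1q)
qed

lemma Heis_conj2: assumes "q > 1" shows "conjg (Heis q) (henc (0,0,q-1)) (henc (0,1,0)) = henc (0,0,q-1)"
proof -
  have s: "0 \<le> q - 1" "q - 1 < q" using assms by auto
  show ?thesis
    unfolding conjg_def Heis_inv2[OF assms]
    using assms s by (simp add: Heis_mult hT_mem hmul_def m1q)
qed


definition dl :: "'a \<Rightarrow> 'a \<Rightarrow> 'k::field" where
  "dl x = (\<lambda>t. if t = x then 1 else 0)"

definition d2 :: "'a \<Rightarrow> 'a \<Rightarrow> 'a \<Rightarrow> 'k::field" where
  "d2 x y = (\<lambda>t. dl x t - dl y t)"

definition subsp :: "('a \<Rightarrow> 'k::field) set \<Rightarrow> bool" where
  "subsp V \<longleftrightarrow> (\<lambda>_. 0) \<in> V \<and> (\<forall>u\<in>V. \<forall>v\<in>V. (\<lambda>t. u t + v t) \<in> V) \<and> (\<forall>c u. u \<in> V \<longrightarrow> (\<lambda>t. c * u t) \<in> V)"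

lemma subspD: assumes "subsp V"
  shows "(\<lambda>_. 0) \<in> V" "u \<in> V \<Longrightarrow> v \<in> V \<Longrightarrow> (\<lambda>t. u t + v t) \<in> V" "u \<in> V \<Longrightarrow> (\<lambda>t. c * u t) \<in> V"
  using assms by (auto simp: subsp_def)

lemma subsp_diff: assumes "subsp V" "u \<in> V" "v \<in> V" shows "(\<lambda>t. u t - v t) \<in> V"
proof -
  have "(\<lambda>t. u t + (-1) * v t) \<in> V" using subspD[OF assms(1)] assms by blast
  then show ?thesis by simp
qed

lemma subsp_sum: assumes "subsp V" "finite S" "\<forall>i\<in>S. h i \<in> V" shows "(\<lambda>t. \<Sum>i\<in>S. h i t) \<in> V"
  using assms(2,3)
proof (induction S rule: finite_induct)
  case empty then show ?case using subspD(1)[OF assms(1)] by simp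
next
  case (insert x F)
  then have "(\<lambda>t. h x t + (\<Sum>i\<in>F. h i t)) \<in> V" using subspD(2)[OF assms(1)] by auto
  then show ?case using insert by simp
qed

lemma sm_iff: "u \<in> set_mult G XX YY \<longleftrightarrow> (\<exists>(n::nat) f g. u = (\<lambda>t. \<Sum>i<n. ga_mult G (f i) (g i) t) \<and> (\<forall>i<n. f i \<in> XX \<and> g i \<in> YY))"
  by (simp add: set_mult_def)

lemma set_add_iff: "u \<in> set_add A D \<longleftrightarrow> (\<exists>a d. u = (\<lambda>t. a t + d t) \<and> a \<in> A \<and> d \<in> D)"
  by (auto simp: set_add_def ga_add_def)

lemma coset_iff: "z \<in> coset_of x V \<longleftrightarrow> (\<exists>v\<in>V. z = (\<lambda>t. x t + v t))"
  by (auto simp: coset_of_def ga_add_def)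

lemma sm_zero: "(\<lambda>_. 0) \<in> set_mult G XX YY"
  unfolding set_mult_def by (rule CollectI, rule exI[of _ "0::nat"]) auto

lemma sm_snoc: assumes "u \<in> set_mult G XX YY" "x \<in> XX" "y \<in> YY"
  shows "(\<lambda>t. u t + ga_mult G x y t) \<in> set_mult G XX YY"
proof -
  obtain n :: nat and f g where u: "u = (\<lambda>t. \<Sum>i<n. ga_mult G (f i) (g i) t)" "\<forall>i<n. f i \<in> XX \<and> g i \<in> YY"
    using assms(1) unfolding sm_iff by blast
  let ?f = "f(n := x)" and ?g = "g(n := y)"
  have "(\<lambda>t. u t + ga_mult G x y t) = (\<lambda>t. \<Sum>i<Suc n. ga_mult G (?f i) (?g i) t)"
    by (simp add: u(1))
  moreover have "\<forall>i<Suc n. ?f i \<in> XX \<and> ?g i \<in> YY" using u(2) assms by (auto simp: less_Suc_eq)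
  ultimately show ?thesis unfolding sm_iff by blast
qed

lemma sm_single: assumes "x \<in> XX" "y \<in> YY" shows "ga_mult G x y \<in> set_mult G XX YY"
  using sm_snoc[OF sm_zero assms] by simp

lemma sm_add: assumes "u \<in> set_mult G XX YY" "v \<in> set_mult G XX YY"
  shows "(\<lambda>t. u t + v t) \<in> set_mult G XX YY"
proof -
  obtain n :: nat and f g where v: "v = (\<lambda>t. \<Sum>i<n. ga_mult G (f i) (g i) t)" "\<forall>i<n. f i \<in> XX \<and> g i \<in> YY"
    using assms(2) unfolding sm_iff by blast
  have "\<forall>i<n. f i \<in> XX \<and> g i \<in> YY \<Longrightarrow> (\<lambda>t. u t + (\<Sum>i<n. ga_mult G (f i) (g i) t)) \<in> set_mult G XX YY" for n
  proof (induction n)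
    case 0 then show ?case using assms(1) by simp
  next
    case (Suc n)
    then have "(\<lambda>t. (u t + (\<Sum>i<n. ga_mult G (f i) (g i) t)) + ga_mult G (f n) (g n) t) \<in> set_mult G XX YY"
      by (intro sm_snoc[where u="\<lambda>t. u t + (\<Sum>i<n. ga_mult G (f i) (g i) t)"]) auto
    then show ?case by (simp add: add.assoc)
  qed
  then show ?thesis using v by simp
qed

lemma ga_mult_scale_right: "ga_mult G f (\<lambda>t. c * g t) = (\<lambda>t. c * ga_mult G f g t)"
  unfolding ga_mult_def by (auto simp: sum_distrib_left algebra_simps)

lemma ga_mult_add_right: "ga_mult G f (\<lambda>t. g t + h t) = (\<lambda>t. ga_mult G f g t + ga_mult G f h t)"
  unfolding ga_mult_def by (auto simp: sum.distrib algebra_simps)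

lemma sm_scale: assumes "\<And>y c. y \<in> YY \<Longrightarrow> (\<lambda>t. c * y t) \<in> YY" "u \<in> set_mult G XX YY"
  shows "(\<lambda>t. c * u t) \<in> set_mult G XX YY"
proof -
  obtain n :: nat and f g where u: "u = (\<lambda>t. \<Sum>i<n. ga_mult G (f i) (g i) t)" "\<forall>i<n. f i \<in> XX \<and> g i \<in> YY"
    using assms(2) unfolding sm_iff by blast
  have "(\<lambda>t. c * u t) = (\<lambda>t. \<Sum>i<n. ga_mult G (f i) (\<lambda>s. c * g i s) t)"
    by (simp add: u(1) ga_mult_scale_right sum_distrib_left)
  moreover have "\<forall>i<n. f i \<in> XX \<and> (\<lambda>s. c * g i s) \<in> YY" using u(2) assms(1) by auto
  ultimately show ?thesis unfolding sm_iff by (intro exI[of _ n] exI[of _ f] exI[of _ "\<lambda>i s. c * g i s"]) simp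
qed

lemma subsp_sm: assumes "subsp YY" shows "subsp (set_mult G XX YY)"
  unfolding subsp_def using sm_zero sm_add sm_scale subspD(3)[OF assms] by blast

lemma sm_mono: assumes "XX \<subseteq> XX'" shows "set_mult G XX YY \<subseteq> set_mult G XX' YY"
proof
  fix u assume "u \<in> set_mult G XX YY"
  then obtain n :: nat and f g where u: "u = (\<lambda>t. \<Sum>i<n. ga_mult G (f i) (g i) t)" "\<forall>i<n. f i \<in> XX \<and> g i \<in> YY"
    unfolding sm_iff by blast
  then show "u \<in> set_mult G XX' YY" unfolding sm_iff using assms by (intro exI[of _ n] exI[of _ f] exI[of _ g]) auto
qed

lemma sm_subset: assumes "subsp V" "\<And>x y. x \<in> XX \<Longrightarrow> y \<in> YY \<Longrightarrow> ga_mult G x y \<in> V"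
  shows "set_mult G XX YY \<subseteq> V"
proof
  fix u assume "u \<in> set_mult G XX YY"
  then obtain n :: nat and f g where u: "u = (\<lambda>t. \<Sum>i<n. ga_mult G (f i) (g i) t)" "\<forall>i<n. f i \<in> XX \<and> g i \<in> YY"
    unfolding sm_iff by blast
  have "(\<lambda>t. \<Sum>i\<in>{..<n}. ga_mult G (f i) (g i) t) \<in> V"
    using u(2) assms by (intro subsp_sum) auto
  then show "u \<in> V" using u by simp
qed

lemma subsp_grp_alg: "subsp (grp_alg G)"
  unfolding subsp_def grp_alg_def by auto

lemma subsp_aug: "subsp (aug_ideal G H)"
  unfolding subsp_def aug_ideal_def grp_alg_def by (auto simp: sum.distrib sum_distrib_left[symmetric])

lemma subsp_set_add: assumes "subsp A" "subsp D" shows "subsp (set_add A D)"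
proof -
  have 1: "(\<lambda>_. 0) \<in> set_add A D"
    unfolding set_add_def ga_add_def using subspD(1)[OF assms(1)] subspD(1)[OF assms(2)]
    by (auto intro!: exI[of _ "\<lambda>_. 0"])
  have 2: "(\<lambda>t. u t + v t) \<in> set_add A D" if h: "u \<in> set_add A D" "v \<in> set_add A D" for u v
  proof -
    obtain a d where ad: "u = (\<lambda>t. a t + d t)" "a \<in> A" "d \<in> D" using h(1) unfolding set_add_iff by blast
    obtain a' d' where ad': "v = (\<lambda>t. a' t + d' t)" "a' \<in> A" "d' \<in> D" using h(2) unfolding set_add_iff by blast
    have "(\<lambda>t. a t + a' t) \<in> A" "(\<lambda>t. d t + d' t) \<in> D"
      using subspD(2)[OF assms(1) ad(2) ad'(2)] subspD(2)[OF assms(2) ad(3) ad'(3)] by auto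
    moreover have "(\<lambda>t. u t + v t) = (\<lambda>t. (a t + a' t) + (d t + d' t))" using ad ad' by (auto simp: algebra_simps)
    ultimately show ?thesis unfolding set_add_iff by (intro exI[of _ "\<lambda>t. a t + a' t"] exI[of _ "\<lambda>t. d t + d' t"]) simp
  qed
  have 3: "(\<lambda>t. c * u t) \<in> set_add A D" if h: "u \<in> set_add A D" for u c
  proof -
    obtain a d where ad: "u = (\<lambda>t. a t + d t)" "a \<in> A" "d \<in> D" using h(1) unfolding set_add_iff by blast
    have "(\<lambda>t. c * a t) \<in> A" "(\<lambda>t. c * d t) \<in> D"
      using subspD(3)[OF assms(1) ad(2)] subspD(3)[OF assms(2) ad(3)] by auto
    moreover have "(\<lambda>t. c * u t) = (\<lambda>t. (c * a t) + (c * d t))" using ad by (auto simp: algebra_simps)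
    ultimately show ?thesis unfolding set_add_iff by (intro exI[of _ "\<lambda>t. c * a t"] exI[of _ "\<lambda>t. c * d t"]) simp
  qed
  show ?thesis using 1 2 3 unfolding subsp_def by blast
qed

lemma coset_eq: assumes "subsp V"
  shows "coset_of x V = coset_of y V \<longleftrightarrow> (\<lambda>t. x t - y t) \<in> V"
proof
  assume "coset_of x V = coset_of y V"
  moreover have "x \<in> coset_of x V" unfolding coset_of_def ga_add_def using subspD(1)[OF assms]
    by (auto intro!: exI[of _ "\<lambda>_. 0"])
  ultimately have "x \<in> coset_of y V" by simp
  then obtain v where "v \<in> V" "x = (\<lambda>t. y t + v t)" unfolding coset_iff by auto
  then show "(\<lambda>t. x t - y t) \<in> V" by simp
next
  assume w: "(\<lambda>t. x t - y t) \<in> V"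
  show "coset_of x V = coset_of y V"
  proof
    show "coset_of x V \<subseteq> coset_of y V"
    proof
      fix z assume "z \<in> coset_of x V"
      then obtain v where v: "v \<in> V" "z = (\<lambda>t. x t + v t)" unfolding coset_iff by auto
      have "(\<lambda>t. (x t - y t) + v t) \<in> V" using subspD(2)[OF assms w v(1)] .
      moreover have "z = (\<lambda>t. y t + ((x t - y t) + v t))" using v by (auto simp: algebra_simps)
      ultimately show "z \<in> coset_of y V" unfolding coset_iff by (intro bexI[of _ "\<lambda>t. (x t - y t) + v t"])
    qed
  next
    show "coset_of y V \<subseteq> coset_of x V"
    proof
      fix z assume "z \<in> coset_of y V"
      then obtain v where v: "v \<in> V" "z = (\<lambda>t. y t + v t)" unfolding coset_iff by auto
      have "(\<lambda>t. v t - (x t - y t)) \<in> V" using subsp_diff[OF assms v(1) w] .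
      moreover have "z = (\<lambda>t. x t + (v t - (x t - y t)))" using v by (auto simp: algebra_simps)
      ultimately show "z \<in> coset_of x V" unfolding coset_iff by (intro bexI[of _ "\<lambda>t. v t - (x t - y t)"])
    qed
  qed
qed


lemma sum_dl: assumes "finite S" "x \<in> S" shows "(\<Sum>s\<in>S. dl x s * P s) = P x"
proof -
  have "(\<Sum>s\<in>S. dl x s * P s) = (\<Sum>s\<in>S. if s = x then P s else 0)"
    by (rule sum.cong) (auto simp: dl_def)
  also have "\<dots> = P x" using assms by (simp add: sum.delta')
  finally show ?thesis .
qed

lemma sum_dl': assumes "finite S" "x \<in> S" shows "(\<Sum>s\<in>S. P s * dl x s) = P x"
  using sum_dl[OF assms, of P] by (simp add: mult.commute)

lemma ga_mult_dl: assumes "group G" "x \<in> carrier G" "y \<in> carrier G" "finite (carrier G)"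
  shows "ga_mult G (dl x) (dl y) = (dl (x \<otimes>\<^bsub>G\<^esub> y) :: 'a \<Rightarrow> 'k::field)"
proof
  fix t
  interpret group G by fact
  show "ga_mult G (dl x) (dl y) t = (dl (x \<otimes>\<^bsub>G\<^esub> y) t :: 'k)"
  proof (cases "t \<in> carrier G")
    case True
    have "ga_mult G (dl x) (dl y) t = (\<Sum>s\<in>carrier G. dl x s * (dl y (inv\<^bsub>G\<^esub> s \<otimes>\<^bsub>G\<^esub> t) :: 'k))"
      using True by (simp add: ga_mult_def)
    also have "\<dots> = dl y (inv\<^bsub>G\<^esub> x \<otimes>\<^bsub>G\<^esub> t)"
      using sum_dl[OF assms(4) assms(2), of "\<lambda>s. dl y (inv\<^bsub>G\<^esub> s \<otimes>\<^bsub>G\<^esub> t)"] by simp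
    also have "\<dots> = dl (x \<otimes>\<^bsub>G\<^esub> y) t"
    proof -
      have "inv\<^bsub>G\<^esub> x \<otimes>\<^bsub>G\<^esub> t = y \<longleftrightarrow> t = x \<otimes>\<^bsub>G\<^esub> y"
      proof
        assume h: "inv\<^bsub>G\<^esub> x \<otimes>\<^bsub>G\<^esub> t = y"
        have "x \<otimes>\<^bsub>G\<^esub> (inv\<^bsub>G\<^esub> x \<otimes>\<^bsub>G\<^esub> t) = t"
          using assms True by (simp add: m_assoc[symmetric])
        then show "t = x \<otimes>\<^bsub>G\<^esub> y" using h by simp
      next
        assume h: "t = x \<otimes>\<^bsub>G\<^esub> y"
        show "inv\<^bsub>G\<^esub> x \<otimes>\<^bsub>G\<^esub> t = y" using assms unfolding h by (simp add: m_assoc[symmetric])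
      qed
      then show ?thesis by (simp add: dl_def)
    qed
    finally show ?thesis .
  next
    case False
    then have "x \<otimes>\<^bsub>G\<^esub> y \<noteq> t" using assms by auto
    then show ?thesis using False by (simp add: ga_mult_def dl_def)
  qed
qed

lemma ga_mult_diff_left: "ga_mult G (\<lambda>t. f t - g t) h = (\<lambda>t. ga_mult G f h t - ga_mult G g h t)"
  unfolding ga_mult_def by (auto simp: sum_subtractf algebra_simps)

lemma ga_mult_diff_right: "ga_mult G f (\<lambda>t. g t - h t) = (\<lambda>t. ga_mult G f g t - ga_mult G f h t)"
  unfolding ga_mult_def by (auto simp: sum_subtractf algebra_simps)

lemma ga_mult_scale_left: "ga_mult G (\<lambda>t. c * f t) g = (\<lambda>t. c * ga_mult G f g t)"
  unfolding ga_mult_def by (auto simp: sum_distrib_left algebra_simps)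

lemma ga_mult_d2: assumes "group G" "finite (carrier G)" "x \<in> carrier G" "y \<in> carrier G" "z \<in> carrier G" "w \<in> carrier G"
  shows "ga_mult G (d2 x y) (d2 z w) = (\<lambda>t. dl (x \<otimes>\<^bsub>G\<^esub> z) t - dl (x \<otimes>\<^bsub>G\<^esub> w) t - dl (y \<otimes>\<^bsub>G\<^esub> z) t + (dl (y \<otimes>\<^bsub>G\<^esub> w) t :: 'k::field))"
  unfolding d2_def ga_mult_diff_left ga_mult_diff_right
  using assms by (simp add: ga_mult_dl algebra_simps)

lemma ga_mult_dl1: assumes "group G" "finite (carrier G)" "f \<in> grp_alg G"
  shows "ga_mult G f (dl \<one>\<^bsub>G\<^esub>) = (f :: 'a \<Rightarrow> 'k::field)"
proof
  fix t
  interpret group G by fact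
  show "ga_mult G f (dl \<one>\<^bsub>G\<^esub>) t = f t"
  proof (cases "t \<in> carrier G")
    case True
    have eq: "(inv\<^bsub>G\<^esub> s \<otimes>\<^bsub>G\<^esub> t = \<one>\<^bsub>G\<^esub>) = (s = t)" if s: "s \<in> carrier G" for s
    proof
      assume "inv\<^bsub>G\<^esub> s \<otimes>\<^bsub>G\<^esub> t = \<one>\<^bsub>G\<^esub>"
      then have "inv\<^bsub>G\<^esub> t = inv\<^bsub>G\<^esub> s" using s True by (intro inv_equality) auto
      then show "s = t" using s True by (metis inv_inv)
    next
      assume "s = t" then show "inv\<^bsub>G\<^esub> s \<otimes>\<^bsub>G\<^esub> t = \<one>\<^bsub>G\<^esub>" using True by simp
    qed
    have "ga_mult G f (dl \<one>\<^bsub>G\<^esub>) t = (\<Sum>s\<in>carrier G. dl t s * f s)"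
      using True by (auto simp: ga_mult_def dl_def eq intro!: sum.cong)
    also have "\<dots> = f t" using sum_dl[OF assms(2) True, of f] by simp
    finally show ?thesis .
  next
    case False
    then show ?thesis using assms(3) by (simp add: ga_mult_def grp_alg_def)
  qed
qed

lemma d2_aug: assumes "finite H" "x \<in> H" "y \<in> H" "H \<subseteq> carrier G"
  shows "d2 x y \<in> (aug_ideal G H :: ('a \<Rightarrow> 'k::field) set)"
proof -
  have "(\<Sum>t\<in>H. (d2 x y t :: 'k)) = 0"
    using sum_dl[OF assms(1,2), of "\<lambda>_. 1::'k"] sum_dl[OF assms(1,3), of "\<lambda>_. 1::'k"]
    by (simp add: d2_def sum_subtractf)
  then show ?thesis using assms unfolding aug_ideal_def grp_alg_def d2_def dl_def by auto
qed

lemma dl_grp_alg: "x \<in> carrier G \<Longrightarrow> dl x \<in> grp_alg G"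
  by (auto simp: grp_alg_def dl_def)

lemma aug_decomp: assumes "finite H" "u \<in> (aug_ideal G H :: ('a \<Rightarrow> 'k::field) set)"
  shows "u = (\<lambda>t. \<Sum>c\<in>H. u c * d2 c \<one>\<^bsub>G\<^esub> t)"
proof
  fix t
  have z: "\<forall>x. x \<notin> H \<longrightarrow> u x = 0" "(\<Sum>x\<in>H. u x) = 0" using assms(2) by (auto simp: aug_ideal_def)
  have "(\<Sum>c\<in>H. u c * d2 c \<one>\<^bsub>G\<^esub> t) = (\<Sum>c\<in>H. u c * dl c t) - (\<Sum>c\<in>H. u c) * dl \<one>\<^bsub>G\<^esub> t"
    by (simp add: d2_def algebra_simps sum_subtractf sum_distrib_right)
  also have "\<dots> = (\<Sum>c\<in>H. u c * dl c t)" using z by simp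
  also have "\<dots> = u t"
  proof (cases "t \<in> H")
    case True
    have "(\<Sum>c\<in>H. u c * dl c t) = (\<Sum>c\<in>H. u c * dl t c)" by (rule sum.cong) (auto simp: dl_def)
    then show ?thesis using sum_dl'[OF assms(1) True] by simp
  next
    case False
    then show ?thesis using z by (auto simp: dl_def intro!: sum.neutral)
  qed
  finally show "u t = (\<Sum>c\<in>H. u c * d2 c \<one>\<^bsub>G\<^esub> t)" by simp
qed

definition LF :: "('a, 'b) monoid_scheme \<Rightarrow> ('a \<Rightarrow> 'k::field) \<Rightarrow> ('a \<Rightarrow> 'k) \<Rightarrow> 'k" where
  "LF G \<Phi> u = (\<Sum>x\<in>carrier G. u x * \<Phi> x)"

lemma LF_mult: assumes "group G" "finite (carrier G)"
  shows "LF G \<Phi> (ga_mult G u v) = (\<Sum>y\<in>carrier G. \<Sum>z\<in>carrier G. u y * v z * \<Phi> (y \<otimes>\<^bsub>G\<^esub> z))"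
proof -
  interpret group G by fact
  have "LF G \<Phi> (ga_mult G u v) = (\<Sum>x\<in>carrier G. \<Sum>y\<in>carrier G. u y * v (inv\<^bsub>G\<^esub> y \<otimes>\<^bsub>G\<^esub> x) * \<Phi> x)"
    unfolding LF_def ga_mult_def by (simp add: sum_distrib_right)
  also have "\<dots> = (\<Sum>y\<in>carrier G. \<Sum>x\<in>carrier G. u y * v (inv\<^bsub>G\<^esub> y \<otimes>\<^bsub>G\<^esub> x) * \<Phi> x)"
    by (rule sum.swap)
  also have "\<dots> = (\<Sum>y\<in>carrier G. \<Sum>z\<in>carrier G. u y * v z * \<Phi> (y \<otimes>\<^bsub>G\<^esub> z))"
  proof (rule sum.cong[OF refl])
    fix y assume y: "y \<in> carrier G"
    have bij: "bij_betw (\<lambda>z. y \<otimes>\<^bsub>G\<^esub> z) (carrier G) (carrier G)"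
      using y by (intro bij_betwI[where g="\<lambda>x. inv\<^bsub>G\<^esub> y \<otimes>\<^bsub>G\<^esub> x"]) (auto simp: m_assoc[symmetric])
    show "(\<Sum>x\<in>carrier G. u y * v (inv\<^bsub>G\<^esub> y \<otimes>\<^bsub>G\<^esub> x) * \<Phi> x) = (\<Sum>z\<in>carrier G. u y * v z * \<Phi> (y \<otimes>\<^bsub>G\<^esub> z))"
      using sum.reindex_bij_betw[OF bij, of "\<lambda>x. u y * v (inv\<^bsub>G\<^esub> y \<otimes>\<^bsub>G\<^esub> x) * \<Phi> x", symmetric] y
      by (simp add: m_assoc[symmetric])
  qed
  finally show ?thesis .
qed


lemma LF_sum_lt: "LF G \<Phi> (\<lambda>t. \<Sum>i<n. h i t) = (\<Sum>i<n. LF G \<Phi> (h i))"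
  unfolding LF_def by (simp add: sum_distrib_right sum.swap[of _ "carrier G"])

lemma LF_diff: "LF G \<Phi> (\<lambda>t. u t - v t) = LF G \<Phi> u - LF G \<Phi> v"
  unfolding LF_def by (simp add: algebra_simps sum_subtractf)

lemma LF_add: "LF G \<Phi> (\<lambda>t. u t + v t) = LF G \<Phi> u + LF G \<Phi> v"
  unfolding LF_def by (simp add: algebra_simps sum.distrib)

lemma LF_scale: "LF G \<Phi> (\<lambda>t. c * u t) = c * LF G \<Phi> u"
  unfolding LF_def by (simp add: algebra_simps sum_distrib_left)

lemma LF_sm_zero: assumes "\<And>x y. x \<in> XX \<Longrightarrow> y \<in> YY \<Longrightarrow> LF G \<Phi> (ga_mult G x y) = 0" "u \<in> set_mult G XX YY"
  shows "LF G \<Phi> u = 0"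
proof -
  obtain n :: nat and f g where u: "u = (\<lambda>t. \<Sum>i<n. ga_mult G (f i) (g i) t)" "\<forall>i<n. f i \<in> XX \<and> g i \<in> YY"
    using assms(2) unfolding sm_iff by blast
  show ?thesis unfolding u(1) LF_sum_lt using u(2) assms(1) by simp
qed

lemma triple_zero:
  fixes x y w :: "'a \<Rightarrow> 'k::field"
  assumes "finite C" "(\<Sum>g\<in>C. x g) = 0" "(\<Sum>g\<in>C. y g) = 0" "(\<Sum>g\<in>C. w g) = 0"
    and T: "\<And>g h l. g \<in> C \<Longrightarrow> h \<in> C \<Longrightarrow> l \<in> C \<Longrightarrow> T g h l = P g h + Q g l + R h l"
  shows "(\<Sum>l\<in>C. w l * (\<Sum>g\<in>C. \<Sum>h\<in>C. x g * y h * T g h l)) = 0"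
proof -
  define K where "K = (\<Sum>g\<in>C. \<Sum>h\<in>C. x g * y h * P g h)"
  have q: "(\<Sum>g\<in>C. \<Sum>h\<in>C. x g * y h * Q g l) = (\<Sum>g\<in>C. x g * Q g l * (\<Sum>h\<in>C. y h))" for l
    unfolding sum_distrib_left by (intro sum.cong refl) (simp add: mult_ac)
  have r: "(\<Sum>g\<in>C. \<Sum>h\<in>C. x g * y h * R h l) = (\<Sum>g\<in>C. x g) * (\<Sum>h\<in>C. y h * R h l)" for l
  proof -
    have "(\<Sum>g\<in>C. \<Sum>h\<in>C. x g * y h * R h l) = (\<Sum>g\<in>C. x g * (\<Sum>h\<in>C. y h * R h l))"
      by (simp add: sum_distrib_left mult.assoc)
    then show ?thesis by (simp add: sum_distrib_right)
  qed
  have e: "(\<Sum>g\<in>C. \<Sum>h\<in>C. x g * y h * T g h l) = K" if l: "l \<in> C" for l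
  proof -
    have "(\<Sum>g\<in>C. \<Sum>h\<in>C. x g * y h * T g h l) = (\<Sum>g\<in>C. \<Sum>h\<in>C. x g * y h * P g h + x g * y h * Q g l + x g * y h * R h l)"
      using l by (intro sum.cong refl) (simp add: T algebra_simps)
    also have "\<dots> = K + (\<Sum>g\<in>C. \<Sum>h\<in>C. x g * y h * Q g l) + (\<Sum>g\<in>C. \<Sum>h\<in>C. x g * y h * R h l)"
      unfolding K_def by (simp add: sum.distrib)
    finally have "(\<Sum>g\<in>C. \<Sum>h\<in>C. x g * y h * T g h l) = K + (\<Sum>g\<in>C. \<Sum>h\<in>C. x g * y h * Q g l) + (\<Sum>g\<in>C. \<Sum>h\<in>C. x g * y h * R h l)" .
    then show ?thesis using q r assms(2,3) by simp
  qed
  have "(\<Sum>l\<in>C. w l * (\<Sum>g\<in>C. \<Sum>h\<in>C. x g * y h * T g h l)) = (\<Sum>l\<in>C. w l * K)"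
    by (intro sum.cong refl) (simp add: e)
  also have "\<dots> = (\<Sum>l\<in>C. w l) * K" by (simp add: sum_distrib_right)
  finally have "(\<Sum>l\<in>C. w l * (\<Sum>g\<in>C. \<Sum>h\<in>C. x g * y h * T g h l)) = (\<Sum>l\<in>C. w l) * K" .
  then show ?thesis using assms(4) by simp
qed

lemma aug_sum_carrier: assumes "u \<in> aug_ideal G H" "H \<subseteq> carrier G" "finite (carrier G)"
  shows "(\<Sum>x\<in>carrier G. u x) = 0"
proof -
  have "(\<Sum>x\<in>carrier G. u x) = (\<Sum>x\<in>H. u x)"
    using assms by (intro sum.mono_neutral_right) (auto simp: aug_ideal_def)
  then show ?thesis using assms(1) by (simp add: aug_ideal_def)
qed

locale quadf =
  fixes G :: "('a, 'b) monoid_scheme" and F Xk Yk :: "'a \<Rightarrow> 'k::field" and H :: "'a set"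
  assumes grp: "group G" and fin: "finite (carrier G)" and Hsub: "H \<subseteq> carrier G"
    and F1: "\<And>g h. g \<in> carrier G \<Longrightarrow> h \<in> carrier G \<Longrightarrow> F (g \<otimes>\<^bsub>G\<^esub> h) = F g + F h + Xk g * Yk h"
    and X1: "\<And>g h. g \<in> carrier G \<Longrightarrow> h \<in> carrier G \<Longrightarrow> Xk (g \<otimes>\<^bsub>G\<^esub> h) = Xk g + Xk h"
    and XH: "\<And>c. c \<in> H \<Longrightarrow> Xk c = 0"
begin

lemma LF_B: assumes "u \<in> aug_ideal G H" "v \<in> aug_ideal G (carrier G)"
  shows "LF G F (ga_mult G u v) = 0"
proof -
  have su: "(\<Sum>y\<in>carrier G. u y) = 0" using aug_sum_carrier[OF assms(1) Hsub fin] .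
  have sv: "(\<Sum>y\<in>carrier G. v y) = 0" using aug_sum_carrier[OF assms(2) _ fin] by simp
  have "LF G F (ga_mult G u v) = (\<Sum>y\<in>carrier G. \<Sum>z\<in>carrier G. u y * v z * F (y \<otimes>\<^bsub>G\<^esub> z))"
    using LF_mult[OF grp fin] .
  also have "\<dots> = (\<Sum>y\<in>carrier G. \<Sum>z\<in>carrier G. u y * v z * (F y + F z))"
  proof (intro sum.cong refl)
    fix y z assume yz: "y \<in> carrier G" "z \<in> carrier G"
    show "u y * v z * F (y \<otimes>\<^bsub>G\<^esub> z) = u y * v z * (F y + F z)"
    proof (cases "y \<in> H")
      case True then show ?thesis using F1[OF yz] XH by simp
    next
      case False then have "u y = 0" using assms(1) by (auto simp: aug_ideal_def)
      then show ?thesis by simp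
    qed
  qed
  also have "\<dots> = (\<Sum>y\<in>carrier G. u y * F y * (\<Sum>z\<in>carrier G. v z) + u y * (\<Sum>z\<in>carrier G. v z * F z))"
  proof (intro sum.cong refl)
    fix y
    show "(\<Sum>z\<in>carrier G. u y * v z * (F y + F z)) = u y * F y * (\<Sum>z\<in>carrier G. v z) + u y * (\<Sum>z\<in>carrier G. v z * F z)"
      unfolding sum_distrib_left distrib_left sum.distrib by (simp add: mult_ac)
  qed
  also have "\<dots> = (\<Sum>y\<in>carrier G. u y) * (\<Sum>z\<in>carrier G. v z * F z)"
    using sv by (simp add: sum_distrib_right)
  also have "\<dots> = 0" using su by simp
  finally show ?thesis .
qed

lemma LF_D1: assumes "x \<in> aug_ideal G (carrier G)" "y \<in> aug_ideal G (carrier G)" "w \<in> aug_ideal G (carrier G)"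
  shows "(\<Sum>l\<in>carrier G. w l * (\<Sum>g\<in>carrier G. \<Sum>h\<in>carrier G. x g * y h * F (g \<otimes>\<^bsub>G\<^esub> h \<otimes>\<^bsub>G\<^esub> l))) = 0"
proof -
  have s: "(\<Sum>y\<in>carrier G. f y) = 0" if "f \<in> (aug_ideal G (carrier G) :: ('a \<Rightarrow> 'k) set)" for f
    using aug_sum_carrier[OF that _ fin] by simp
  show ?thesis
  proof (rule triple_zero[OF fin s[OF assms(1)] s[OF assms(2)] s[OF assms(3)]])
    fix g h l assume g: "g \<in> carrier G" and h: "h \<in> carrier G" and l: "l \<in> carrier G"
    have gh: "g \<otimes>\<^bsub>G\<^esub> h \<in> carrier G" using monoid.m_closed[OF group.is_monoid[OF grp] g h] .
    show "F (g \<otimes>\<^bsub>G\<^esub> h \<otimes>\<^bsub>G\<^esub> l) = (F g + F h + Xk g * Yk h) + (F l + Xk g * Yk l) + (Xk h * Yk l)"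
      using F1[OF gh l] F1[OF g h] X1[OF g h] by (simp add: algebra_simps)
  qed
qed

end


abbreviation AI :: "('a, 'b) monoid_scheme \<Rightarrow> ('a \<Rightarrow> 'k::field) set" where
  "AI G \<equiv> aug_ideal G (carrier G)"

lemma swap_mult: "(\<Sum>z\<in>A. w z * (\<Sum>i\<in>B. T i z)) = (\<Sum>i\<in>B. \<Sum>z\<in>A. (w z :: 'k::field) * T i z)"
  by (simp add: sum_distrib_left sum.swap[of _ B])

context quadf begin

lemma LF_Bset: assumes "u \<in> set_mult G (aug_ideal G H) (AI G)" shows "LF G F u = 0"
  using LF_sm_zero[OF _ assms] LF_B by blast

lemma LF_Dgen: assumes "f \<in> set_mult G (AI G) (AI G)" "w \<in> AI G"
  shows "LF G F (ga_mult G f w) = 0"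
proof -
  obtain n :: nat and x y where f: "f = (\<lambda>t. \<Sum>i<n. ga_mult G (x i) (y i) t)" "\<forall>i<n. x i \<in> AI G \<and> y i \<in> AI G"
    using assms(1) unfolding sm_iff by blast
  have "LF G F (ga_mult G f w) = (\<Sum>y\<in>carrier G. \<Sum>z\<in>carrier G. f y * w z * F (y \<otimes>\<^bsub>G\<^esub> z))"
    using LF_mult[OF grp fin] .
  also have "\<dots> = (\<Sum>z\<in>carrier G. \<Sum>y\<in>carrier G. f y * w z * F (y \<otimes>\<^bsub>G\<^esub> z))"
    by (rule sum.swap)
  also have "\<dots> = (\<Sum>z\<in>carrier G. w z * LF G (\<lambda>y. F (y \<otimes>\<^bsub>G\<^esub> z)) f)"
  proof (rule sum.cong[OF refl])
    fix z
    have "(\<Sum>y\<in>carrier G. f y * w z * F (y \<otimes>\<^bsub>G\<^esub> z)) = (\<Sum>y\<in>carrier G. w z * (f y * F (y \<otimes>\<^bsub>G\<^esub> z)))"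
      by (rule sum.cong[OF refl]) (simp only: mult.assoc mult.commute mult.left_commute)
    then show "(\<Sum>y\<in>carrier G. f y * w z * F (y \<otimes>\<^bsub>G\<^esub> z)) = w z * LF G (\<lambda>y. F (y \<otimes>\<^bsub>G\<^esub> z)) f"
      by (simp only: LF_def sum_distrib_left)
  qed
  also have "\<dots> = (\<Sum>z\<in>carrier G. w z * (\<Sum>i<n. \<Sum>g\<in>carrier G. \<Sum>h\<in>carrier G. x i g * y i h * F (g \<otimes>\<^bsub>G\<^esub> h \<otimes>\<^bsub>G\<^esub> z)))"
    unfolding f(1) LF_sum_lt LF_mult[OF grp fin] by simp
  also have "\<dots> = (\<Sum>i<n. \<Sum>z\<in>carrier G. w z * (\<Sum>g\<in>carrier G. \<Sum>h\<in>carrier G. x i g * y i h * F (g \<otimes>\<^bsub>G\<^esub> h \<otimes>\<^bsub>G\<^esub> z)))"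
    by (rule swap_mult)
  also have "\<dots> = 0"
    using f(2) assms(2) LF_D1 by simp
  finally show ?thesis .
qed

lemma LF_Dset: assumes "u \<in> set_mult G (set_mult G (AI G) (AI G)) (AI G)" shows "LF G F u = 0"
  using LF_sm_zero[OF _ assms] LF_Dgen by blast

end

lemma X_derived:
  fixes Xk :: "'a \<Rightarrow> 'k::field"
  assumes grp: "group G" and X1: "\<And>g h. g \<in> carrier G \<Longrightarrow> h \<in> carrier G \<Longrightarrow> Xk (g \<otimes>\<^bsub>G\<^esub> h) = Xk g + Xk h"
    and c: "c \<in> derived G (carrier G)"
  shows "Xk c = 0"
proof -
  interpret group G by fact
  have "Xk \<one>\<^bsub>G\<^esub> = Xk \<one>\<^bsub>G\<^esub> + Xk \<one>\<^bsub>G\<^esub>" using X1[of "\<one>\<^bsub>G\<^esub>" "\<one>\<^bsub>G\<^esub>"] by simp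
  then have one: "Xk \<one>\<^bsub>G\<^esub> = 0" by (metis add_cancel_right_right)
  have inv: "Xk (inv\<^bsub>G\<^esub> g) = - Xk g" if "g \<in> carrier G" for g
    using X1[of "inv\<^bsub>G\<^esub> g" g] that one by (simp add: eq_neg_iff_add_eq_0)
  let ?K = "{c \<in> carrier G. Xk c = 0}"
  have sub: "subgroup ?K G"
    by (rule subgroupI) (auto simp: one inv X1)
  have "derived_set G (carrier G) \<subseteq> ?K"
    by (auto simp: X1 inv)
  then have "derived G (carrier G) \<subseteq> ?K"
    unfolding derived_def by (rule generate_subgroup_incl[OF _ sub])
  then show ?thesis using c by blast
qed

lemma mult_SM:
  assumes grp: "group G" and fin: "finite (carrier G)" and c: "c \<in> carrier G" and d: "d \<in> carrier G"
    and sc: "(d2 c \<one>\<^bsub>G\<^esub> :: 'a \<Rightarrow> 'k::field) \<in> set_mult G (AI G) (AI G)" and sd: "(d2 d \<one>\<^bsub>G\<^esub> :: 'a \<Rightarrow> 'k) \<in> set_mult G (AI G) (AI G)"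
  shows "(d2 (c \<otimes>\<^bsub>G\<^esub> d) \<one>\<^bsub>G\<^esub> :: 'a \<Rightarrow> 'k) \<in> set_mult G (AI G) (AI G)"
proof -
  interpret group G by fact
  let ?m = "ga_mult G (d2 c \<one>\<^bsub>G\<^esub>) (d2 d \<one>\<^bsub>G\<^esub>) :: 'a \<Rightarrow> 'k"
  have m: "?m \<in> set_mult G (AI G) (AI G)"
    using c d fin by (intro sm_single d2_aug) auto
  have mem: "(\<lambda>t. (d2 c \<one>\<^bsub>G\<^esub> t + d2 d \<one>\<^bsub>G\<^esub> t) + ?m t) \<in> set_mult G (AI G) (AI G)"
    using sm_add[OF sm_add[OF sc sd] m] .
  have q: "?m = (\<lambda>t. dl (c \<otimes>\<^bsub>G\<^esub> d) t - dl c t - dl d t + dl \<one>\<^bsub>G\<^esub> t)"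
    using ga_mult_d2[OF grp fin c one_closed d one_closed] c d by simp
  have eq: "(\<lambda>t. (d2 c \<one>\<^bsub>G\<^esub> t + d2 d \<one>\<^bsub>G\<^esub> t) + ?m t) = d2 (c \<otimes>\<^bsub>G\<^esub> d) \<one>\<^bsub>G\<^esub>"
    unfolding q by (simp add: d2_def)
  show ?thesis by (subst eq[symmetric]) (rule mem)
qed

lemma inv_SM:
  assumes grp: "group G" and fin: "finite (carrier G)" and c: "c \<in> carrier G"
    and sc: "(d2 c \<one>\<^bsub>G\<^esub> :: 'a \<Rightarrow> 'k::field) \<in> set_mult G (AI G) (AI G)"
  shows "(d2 (inv\<^bsub>G\<^esub> c) \<one>\<^bsub>G\<^esub> :: 'a \<Rightarrow> 'k) \<in> set_mult G (AI G) (AI G)"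
proof -
  interpret group G by fact
  let ?m = "ga_mult G (d2 c \<one>\<^bsub>G\<^esub>) (d2 (inv\<^bsub>G\<^esub> c) \<one>\<^bsub>G\<^esub>) :: 'a \<Rightarrow> 'k"
  have ss: "subsp (set_mult G (AI G) (AI G) :: ('a \<Rightarrow> 'k) set)" by (rule subsp_sm[OF subsp_aug])
  have m: "?m \<in> set_mult G (AI G) (AI G)"
    using c fin by (intro sm_single d2_aug) auto
  have mem: "(\<lambda>t. (-1) * d2 c \<one>\<^bsub>G\<^esub> t + (-1) * ?m t) \<in> set_mult G (AI G) (AI G)"
    using subspD(2)[OF ss subspD(3)[OF ss sc] subspD(3)[OF ss m]] .
  have q: "?m = (\<lambda>t. dl \<one>\<^bsub>G\<^esub> t - dl c t - dl (inv\<^bsub>G\<^esub> c) t + dl \<one>\<^bsub>G\<^esub> t)"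
    using ga_mult_d2[OF grp fin c one_closed inv_closed[OF c] one_closed] c by simp
  have eq: "(\<lambda>t. (-1) * d2 c \<one>\<^bsub>G\<^esub> t + (-1) * ?m t) = d2 (inv\<^bsub>G\<^esub> c) \<one>\<^bsub>G\<^esub>"
    unfolding q by (simp add: d2_def)
  show ?thesis by (subst eq[symmetric]) (rule mem)
qed

lemma comm_SM:
  assumes grp: "group G" and fin: "finite (carrier G)" and g: "g \<in> carrier G" and h: "h \<in> carrier G"
  shows "(d2 (g \<otimes>\<^bsub>G\<^esub> h \<otimes>\<^bsub>G\<^esub> inv\<^bsub>G\<^esub> g \<otimes>\<^bsub>G\<^esub> inv\<^bsub>G\<^esub> h) \<one>\<^bsub>G\<^esub> :: 'a \<Rightarrow> 'k::field) \<in> set_mult G (AI G) (AI G)"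
proof -
  interpret group G by fact
  define c where "c = g \<otimes>\<^bsub>G\<^esub> h \<otimes>\<^bsub>G\<^esub> inv\<^bsub>G\<^esub> g \<otimes>\<^bsub>G\<^esub> inv\<^bsub>G\<^esub> h"
  define a where "a = h \<otimes>\<^bsub>G\<^esub> inv\<^bsub>G\<^esub> g \<otimes>\<^bsub>G\<^esub> inv\<^bsub>G\<^esub> h"
  define b where "b = inv\<^bsub>G\<^esub> g \<otimes>\<^bsub>G\<^esub> inv\<^bsub>G\<^esub> h"
  have ac: "a \<in> carrier G" "b \<in> carrier G" "inv\<^bsub>G\<^esub> h \<in> carrier G" using g h by (auto simp: a_def b_def)
  have e1: "g \<otimes>\<^bsub>G\<^esub> a = c" using g h by (simp add: a_def c_def m_assoc)
  have e2: "g \<otimes>\<^bsub>G\<^esub> b = inv\<^bsub>G\<^esub> h" using g h by (simp add: b_def m_assoc[symmetric])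
  have e3: "h \<otimes>\<^bsub>G\<^esub> b = a" using g h by (simp add: a_def b_def m_assoc)
  have e4: "h \<otimes>\<^bsub>G\<^esub> inv\<^bsub>G\<^esub> h = \<one>\<^bsub>G\<^esub>" using h by simp
  let ?m1 = "ga_mult G (d2 g \<one>\<^bsub>G\<^esub>) (d2 a b) :: 'a \<Rightarrow> 'k"
  let ?m2 = "ga_mult G (d2 \<one>\<^bsub>G\<^esub> h) (d2 (inv\<^bsub>G\<^esub> h) b) :: 'a \<Rightarrow> 'k"
  have m1: "?m1 \<in> set_mult G (AI G) (AI G)" using g ac fin by (intro sm_single d2_aug) auto
  have m2: "?m2 \<in> set_mult G (AI G) (AI G)" using h ac fin by (intro sm_single d2_aug) auto
  have mem: "(\<lambda>t. ?m1 t + ?m2 t) \<in> set_mult G (AI G) (AI G)" using sm_add[OF m1 m2] .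
  have q1: "?m1 = (\<lambda>t. dl c t - dl (inv\<^bsub>G\<^esub> h) t - dl a t + dl b t)"
    using ga_mult_d2[OF grp fin g one_closed ac(1) ac(2)] g ac by (simp add: e1 e2)
  have q2: "?m2 = (\<lambda>t. dl (inv\<^bsub>G\<^esub> h) t - dl b t - dl \<one>\<^bsub>G\<^esub> t + dl a t)"
    using ga_mult_d2[OF grp fin one_closed h ac(3) ac(2)] h ac by (simp add: e3 e4)
  have eq: "(\<lambda>t. ?m1 t + ?m2 t) = d2 c \<one>\<^bsub>G\<^esub>"
    unfolding q1 q2 by (simp add: d2_def)
  show ?thesis unfolding c_def[symmetric] using mem eq by simp
qed

lemma derived_SM:
  assumes grp: "group G" and fin: "finite (carrier G)" and c: "c \<in> derived G (carrier G)"
  shows "(d2 c \<one>\<^bsub>G\<^esub> :: 'a \<Rightarrow> 'k::field) \<in> set_mult G (AI G) (AI G)"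
proof -
  interpret group G by fact
  have S: "derived_set G (carrier G) \<subseteq> carrier G" by (rule derived_set_in_carrier) simp
  have "c \<in> generate G (derived_set G (carrier G))" using c by (simp add: derived_def)
  then have "c \<in> carrier G \<and> (d2 c \<one>\<^bsub>G\<^esub> :: 'a \<Rightarrow> 'k) \<in> set_mult G (AI G) (AI G)"
  proof (induction rule: generate.induct)
    case one
    have "(d2 \<one>\<^bsub>G\<^esub> \<one>\<^bsub>G\<^esub> :: 'a \<Rightarrow> 'k) = (\<lambda>_. 0)" by (simp add: d2_def)
    then show ?case using sm_zero by simp
  next
    case (incl h)
    then obtain x y where xy: "x \<in> carrier G" "y \<in> carrier G" "h = x \<otimes>\<^bsub>G\<^esub> y \<otimes>\<^bsub>G\<^esub> inv\<^bsub>G\<^esub> x \<otimes>\<^bsub>G\<^esub> inv\<^bsub>G\<^esub> y" by blast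
    then show ?case using comm_SM[OF grp fin xy(1,2)] by simp
  next
    case (inv h)
    then obtain x y where xy: "x \<in> carrier G" "y \<in> carrier G" "h = x \<otimes>\<^bsub>G\<^esub> y \<otimes>\<^bsub>G\<^esub> inv\<^bsub>G\<^esub> x \<otimes>\<^bsub>G\<^esub> inv\<^bsub>G\<^esub> y" by blast
    have hc: "h \<in> carrier G" using xy by simp
    then show ?case using inv_SM[OF grp fin hc] comm_SM[OF grp fin xy(1,2)] xy(3) by simp
  next
    case (eng h1 h2)
    then have "h1 \<in> carrier G" "h2 \<in> carrier G" "(d2 h1 \<one>\<^bsub>G\<^esub> :: 'a \<Rightarrow> 'k) \<in> set_mult G (AI G) (AI G)"
      "(d2 h2 \<one>\<^bsub>G\<^esub> :: 'a \<Rightarrow> 'k) \<in> set_mult G (AI G) (AI G)" by auto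
    then show ?case using mult_SM[OF grp fin, of h1 h2] by simp
  qed
  then show ?thesis by simp
qed

lemma I'_sub_SM:
  assumes grp: "group G" and fin: "finite (carrier G)"
  shows "(aug_ideal G (derived G (carrier G)) :: ('a \<Rightarrow> 'k::field) set) \<subseteq> set_mult G (AI G) (AI G)"
proof
  interpret group G by fact
  fix u :: "'a \<Rightarrow> 'k" assume u: "u \<in> aug_ideal G (derived G (carrier G))"
  have Dsub: "derived G (carrier G) \<subseteq> carrier G" by (rule derived_in_carrier) simp
  have finD: "finite (derived G (carrier G))" using finite_subset[OF Dsub fin] .
  have ss: "subsp (set_mult G (AI G) (AI G) :: ('a \<Rightarrow> 'k) set)" by (rule subsp_sm[OF subsp_aug])
  have "(\<lambda>t. \<Sum>c\<in>derived G (carrier G). u c * d2 c \<one>\<^bsub>G\<^esub> t) \<in> set_mult G (AI G) (AI G)"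
    using derived_SM[OF grp fin] subspD(3)[OF ss] by (intro subsp_sum[OF ss finD]) blast
  then show "u \<in> set_mult G (AI G) (AI G)" using aug_decomp[OF finD u] by simp
qed


lemma span_gen:
  assumes grp: "group G" and fin: "finite (carrier G)"
    and gen: "derived G (carrier G) = generate G {g}" and g: "g \<in> derived G (carrier G)"
    and c: "c \<in> derived G (carrier G)"
  shows "\<exists>r. (\<lambda>t. d2 c \<one>\<^bsub>G\<^esub> t - r * d2 g \<one>\<^bsub>G\<^esub> t) \<in>
     (set_mult G (aug_ideal G (derived G (carrier G))) (AI G) :: ('a \<Rightarrow> 'k::field) set)"
proof -
  interpret group G by fact
  define Dr where "Dr = derived G (carrier G)"
  let ?B = "set_mult G (aug_ideal G Dr) (AI G) :: ('a \<Rightarrow> 'k) set"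
  have Dsub: "Dr \<subseteq> carrier G" unfolding Dr_def by (rule derived_in_carrier) simp
  have sg: "subgroup Dr G" unfolding Dr_def by (rule derived_is_subgroup) simp
  have finD: "finite Dr" using finite_subset[OF Dsub fin] .
  have oneD: "\<one>\<^bsub>G\<^esub> \<in> Dr" using subgroup.one_closed[OF sg] .
  have ssB: "subsp ?B" by (rule subsp_sm[OF subsp_aug])
  have gD: "g \<in> Dr" using g by (simp add: Dr_def)
  have "c \<in> generate G {g}" using c gen by simp
  then have "c \<in> Dr \<and> (\<exists>r. (\<lambda>t. d2 c \<one>\<^bsub>G\<^esub> t - r * d2 g \<one>\<^bsub>G\<^esub> t) \<in> ?B)"
  proof (induction rule: generate.induct)
    case one
    have "(\<lambda>t. d2 \<one>\<^bsub>G\<^esub> \<one>\<^bsub>G\<^esub> t - 0 * d2 g \<one>\<^bsub>G\<^esub> t) = (\<lambda>_. 0::'k)" by (simp add: d2_def)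
    then show ?case using sm_zero oneD by metis
  next
    case (incl h)
    then have "h = g" by simp
    moreover have "(\<lambda>t. d2 g \<one>\<^bsub>G\<^esub> t - 1 * d2 g \<one>\<^bsub>G\<^esub> t) = (\<lambda>_. 0::'k)" by simp
    ultimately show ?case using sm_zero gD by metis
  next
    case (inv h)
    then have h: "h = g" by simp
    have gc: "g \<in> carrier G" using gD Dsub by auto
    have igD: "inv\<^bsub>G\<^esub> g \<in> Dr" using subgroup.m_inv_closed[OF sg gD] .
    let ?m = "ga_mult G (d2 g \<one>\<^bsub>G\<^esub>) (d2 (inv\<^bsub>G\<^esub> g) \<one>\<^bsub>G\<^esub>) :: 'a \<Rightarrow> 'k"
    have m: "?m \<in> ?B" using gD oneD gc finD fin Dsub by (intro sm_single d2_aug) auto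
    have q: "?m = (\<lambda>t. dl \<one>\<^bsub>G\<^esub> t - dl g t - dl (inv\<^bsub>G\<^esub> g) t + dl \<one>\<^bsub>G\<^esub> t)"
      using ga_mult_d2[OF grp fin gc one_closed inv_closed[OF gc] one_closed] gc by simp
    have eq: "(\<lambda>t. (-1) * ?m t) = (\<lambda>t. d2 (inv\<^bsub>G\<^esub> g) \<one>\<^bsub>G\<^esub> t - (-1) * d2 g \<one>\<^bsub>G\<^esub> t)"
      unfolding q by (simp add: d2_def)
    have "(\<lambda>t. d2 (inv\<^bsub>G\<^esub> g) \<one>\<^bsub>G\<^esub> t - (-1) * d2 g \<one>\<^bsub>G\<^esub> t) \<in> ?B"
      by (subst eq[symmetric]) (rule subspD(3)[OF ssB m])
    then show ?case using h igD by blast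
  next
    case (eng h1 h2)
    then obtain l1 l2 where h1: "h1 \<in> Dr" "(\<lambda>t. d2 h1 \<one>\<^bsub>G\<^esub> t - l1 * d2 g \<one>\<^bsub>G\<^esub> t) \<in> ?B"
      and h2: "h2 \<in> Dr" "(\<lambda>t. d2 h2 \<one>\<^bsub>G\<^esub> t - l2 * d2 g \<one>\<^bsub>G\<^esub> t) \<in> ?B" by blast
    have hc: "h1 \<in> carrier G" "h2 \<in> carrier G" using h1 h2 Dsub by auto
    let ?m = "ga_mult G (d2 h1 \<one>\<^bsub>G\<^esub>) (d2 h2 \<one>\<^bsub>G\<^esub>) :: 'a \<Rightarrow> 'k"
    have m: "?m \<in> ?B" using h1 oneD hc finD fin Dsub by (intro sm_single d2_aug) auto
    have q: "?m = (\<lambda>t. dl (h1 \<otimes>\<^bsub>G\<^esub> h2) t - dl h1 t - dl h2 t + dl \<one>\<^bsub>G\<^esub> t)"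
      using ga_mult_d2[OF grp fin hc(1) one_closed hc(2) one_closed] hc by simp
    have eq: "(\<lambda>t. ((d2 h1 \<one>\<^bsub>G\<^esub> t - l1 * d2 g \<one>\<^bsub>G\<^esub> t) + (d2 h2 \<one>\<^bsub>G\<^esub> t - l2 * d2 g \<one>\<^bsub>G\<^esub> t)) + ?m t)
        = (\<lambda>t. d2 (h1 \<otimes>\<^bsub>G\<^esub> h2) \<one>\<^bsub>G\<^esub> t - (l1 + l2) * d2 g \<one>\<^bsub>G\<^esub> t)"
      unfolding q by (simp add: d2_def algebra_simps)
    have "(\<lambda>t. d2 (h1 \<otimes>\<^bsub>G\<^esub> h2) \<one>\<^bsub>G\<^esub> t - (l1 + l2) * d2 g \<one>\<^bsub>G\<^esub> t) \<in> ?B"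
      by (subst eq[symmetric]) (rule subspD(2)[OF ssB subspD(2)[OF ssB h1(2) h2(2)] m])
    moreover have "h1 \<otimes>\<^bsub>G\<^esub> h2 \<in> Dr" using subgroup.m_closed[OF sg h1(1) h2(1)] .
    ultimately show ?case by blast
  qed
  then show ?thesis unfolding Dr_def by blast
qed

lemma span_I':
  assumes grp: "group G" and fin: "finite (carrier G)"
    and gen: "derived G (carrier G) = generate G {g}" and g: "g \<in> derived G (carrier G)"
    and u: "u \<in> aug_ideal G (derived G (carrier G))"
  shows "\<exists>r. (\<lambda>t. u t - r * d2 g \<one>\<^bsub>G\<^esub> t) \<in>
     (set_mult G (aug_ideal G (derived G (carrier G))) (AI G) :: ('a \<Rightarrow> 'k::field) set)"
proof -
  interpret group G by fact
  define Dr where "Dr = derived G (carrier G)"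
  let ?B = "set_mult G (aug_ideal G Dr) (AI G) :: ('a \<Rightarrow> 'k) set"
  have Dsub: "Dr \<subseteq> carrier G" unfolding Dr_def by (rule derived_in_carrier) simp
  have finD: "finite Dr" using finite_subset[OF Dsub fin] .
  have ssB: "subsp ?B" by (rule subsp_sm[OF subsp_aug])
  have "\<forall>c\<in>Dr. \<exists>r. (\<lambda>t. d2 c \<one>\<^bsub>G\<^esub> t - r * d2 g \<one>\<^bsub>G\<^esub> t) \<in> ?B"
    using span_gen[OF grp fin gen g] unfolding Dr_def by blast
  then obtain L where L: "\<And>c. c \<in> Dr \<Longrightarrow> (\<lambda>t. d2 c \<one>\<^bsub>G\<^esub> t - L c * d2 g \<one>\<^bsub>G\<^esub> t) \<in> ?B"
    by metis
  have mem: "(\<lambda>t. \<Sum>c\<in>Dr. u c * (d2 c \<one>\<^bsub>G\<^esub> t - L c * d2 g \<one>\<^bsub>G\<^esub> t)) \<in> ?B"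
    using L subspD(3)[OF ssB] by (intro subsp_sum[OF ssB finD]) blast
  have eq: "(\<lambda>t. \<Sum>c\<in>Dr. u c * (d2 c \<one>\<^bsub>G\<^esub> t - L c * d2 g \<one>\<^bsub>G\<^esub> t)) =
      (\<lambda>t. u t - (\<Sum>c\<in>Dr. u c * L c) * d2 g \<one>\<^bsub>G\<^esub> t)"
  proof
    fix t
    have "(\<Sum>c\<in>Dr. u c * (d2 c \<one>\<^bsub>G\<^esub> t - L c * d2 g \<one>\<^bsub>G\<^esub> t)) =
        (\<Sum>c\<in>Dr. u c * d2 c \<one>\<^bsub>G\<^esub> t) - (\<Sum>c\<in>Dr. u c * L c) * d2 g \<one>\<^bsub>G\<^esub> t"
    proof -
      have "(\<Sum>c\<in>Dr. u c * (d2 c \<one>\<^bsub>G\<^esub> t - L c * d2 g \<one>\<^bsub>G\<^esub> t)) =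
        (\<Sum>c\<in>Dr. u c * d2 c \<one>\<^bsub>G\<^esub> t) - (\<Sum>c\<in>Dr. u c * L c * d2 g \<one>\<^bsub>G\<^esub> t)"
        by (simp add: right_diff_distrib sum_subtractf mult.assoc)
      also have "(\<Sum>c\<in>Dr. u c * L c * d2 g \<one>\<^bsub>G\<^esub> t) = (\<Sum>c\<in>Dr. u c * L c) * d2 g \<one>\<^bsub>G\<^esub> t"
        by (simp add: sum_distrib_right)
      finally show ?thesis .
    qed
    also have "(\<Sum>c\<in>Dr. u c * d2 c \<one>\<^bsub>G\<^esub> t) = u t"
      using fun_cong[OF aug_decomp[OF finD u[folded Dr_def]], of t] by simp
    finally show "(\<Sum>c\<in>Dr. u c * (d2 c \<one>\<^bsub>G\<^esub> t - L c * d2 g \<one>\<^bsub>G\<^esub> t)) = u t - (\<Sum>c\<in>Dr. u c * L c) * d2 g \<one>\<^bsub>G\<^esub> t" .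
  qed
  show ?thesis unfolding Dr_def[symmetric] by (rule exI, subst eq[symmetric], rule mem)
qed

lemma span_A:
  assumes grp: "group G" and fin: "finite (carrier G)"
    and gen: "derived G (carrier G) = generate G {g}" and g: "g \<in> derived G (carrier G)"
    and v: "v \<in> set_mult G (aug_ideal G (derived G (carrier G))) (grp_alg G)"
  shows "\<exists>r. (\<lambda>t. v t - r * d2 g \<one>\<^bsub>G\<^esub> t) \<in>
     (set_mult G (aug_ideal G (derived G (carrier G))) (AI G) :: ('a \<Rightarrow> 'k::field) set)"
proof -
  interpret group G by fact
  define Dr where "Dr = derived G (carrier G)"
  let ?B = "set_mult G (aug_ideal G Dr) (AI G) :: ('a \<Rightarrow> 'k) set"
  have ssB: "subsp ?B" by (rule subsp_sm[OF subsp_aug])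
  have gen1: "\<exists>r. (\<lambda>t. ga_mult G f h t - r * d2 g \<one>\<^bsub>G\<^esub> t) \<in> ?B"
    if f: "f \<in> aug_ideal G Dr" and h: "h \<in> grp_alg G" for f h :: "'a \<Rightarrow> 'k"
  proof -
    obtain l where l: "(\<lambda>t. f t - l * d2 g \<one>\<^bsub>G\<^esub> t) \<in> ?B"
      using span_I'[OF grp fin gen g f[unfolded Dr_def]] unfolding Dr_def by blast
    define \<epsilon> where "\<epsilon> = (\<Sum>x\<in>carrier G. h x)"
    define h' where "h' = (\<lambda>t. h t - \<epsilon> * dl \<one>\<^bsub>G\<^esub> t)"
    have h'I: "h' \<in> AI G"
    proof -
      have "(\<Sum>x\<in>carrier G. h' x) = \<epsilon> - \<epsilon> * (\<Sum>x\<in>carrier G. dl \<one>\<^bsub>G\<^esub> x)"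
        by (simp add: h'_def \<epsilon>_def sum_subtractf sum_distrib_left)
      also have "(\<Sum>x\<in>carrier G. dl \<one>\<^bsub>G\<^esub> x :: 'k) = 1"
        using sum_dl[OF fin one_closed, of "\<lambda>_. 1::'k"] by simp
      finally have "(\<Sum>x\<in>carrier G. h' x) = 0" by simp
      moreover have "\<forall>x. x \<notin> carrier G \<longrightarrow> h' x = 0"
        using h by (auto simp: h'_def grp_alg_def dl_def)
      ultimately show ?thesis by (simp add: aug_ideal_def grp_alg_def)
    qed
    have fA: "f \<in> grp_alg G" using f by (simp add: aug_ideal_def)
    have "ga_mult G f h = ga_mult G f (\<lambda>t. h' t + \<epsilon> * dl \<one>\<^bsub>G\<^esub> t)"
      by (simp add: h'_def)
    also have "\<dots> = (\<lambda>t. ga_mult G f h' t + \<epsilon> * f t)"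
      by (simp add: ga_mult_add_right ga_mult_scale_right ga_mult_dl1[OF grp fin fA])
    finally have eqm: "ga_mult G f h = (\<lambda>t. ga_mult G f h' t + \<epsilon> * f t)" .
    have m: "ga_mult G f h' \<in> ?B" using sm_single[OF f h'I] .
    have mem: "(\<lambda>t. ga_mult G f h' t + \<epsilon> * (f t - l * d2 g \<one>\<^bsub>G\<^esub> t)) \<in> ?B"
      using subspD(2)[OF ssB m subspD(3)[OF ssB l]] .
    have eq: "(\<lambda>t. ga_mult G f h' t + \<epsilon> * (f t - l * d2 g \<one>\<^bsub>G\<^esub> t)) = (\<lambda>t. ga_mult G f h t - (\<epsilon> * l) * d2 g \<one>\<^bsub>G\<^esub> t)"
      unfolding eqm by (simp add: algebra_simps)
    show ?thesis by (rule exI[of _ "\<epsilon> * l"], subst eq[symmetric], rule mem)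
  qed
  obtain n :: nat and f h where vv: "v = (\<lambda>t. \<Sum>i<n. ga_mult G (f i) (h i) t)" "\<forall>i<n. f i \<in> aug_ideal G Dr \<and> h i \<in> grp_alg G"
    using v unfolding sm_iff Dr_def by blast
  have "\<forall>i. \<exists>r. i < n \<longrightarrow> (\<lambda>t. ga_mult G (f i) (h i) t - r * d2 g \<one>\<^bsub>G\<^esub> t) \<in> ?B"
    using gen1 vv(2) by blast
  then obtain L where L: "\<And>i. i < n \<Longrightarrow> (\<lambda>t. ga_mult G (f i) (h i) t - L i * d2 g \<one>\<^bsub>G\<^esub> t) \<in> ?B"
    by metis
  have mem: "(\<lambda>t. \<Sum>i\<in>{..<n}. ga_mult G (f i) (h i) t - L i * d2 g \<one>\<^bsub>G\<^esub> t) \<in> ?B"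
    using L by (intro subsp_sum[OF ssB]) auto
  have eq: "(\<lambda>t. \<Sum>i\<in>{..<n}. ga_mult G (f i) (h i) t - L i * d2 g \<one>\<^bsub>G\<^esub> t) = (\<lambda>t. v t - (\<Sum>i<n. L i) * d2 g \<one>\<^bsub>G\<^esub> t)"
    unfolding vv(1) by (simp add: sum_subtractf sum_distrib_right)
  show ?thesis unfolding Dr_def[symmetric] by (rule exI, subst eq[symmetric], rule mem)
qed


lemma char_p:
  assumes "card (UNIV :: 'k::{field,finite} set) = p"
  shows "(of_nat p :: 'k) = 0"
proof -
  define A :: "'k monoid" where "A = \<lparr>carrier = (UNIV :: 'k set), monoid.mult = ((+) :: 'k \<Rightarrow> 'k \<Rightarrow> 'k), one = (0::'k)\<rparr>"
  have grpA: "group A"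
  proof (rule groupI)
    fix x assume "x \<in> carrier A"
    show "\<exists>y\<in>carrier A. y \<otimes>\<^bsub>A\<^esub> x = \<one>\<^bsub>A\<^esub>" by (rule bexI[of _ "-x"]) (simp_all add: A_def)
  qed (auto simp: A_def add.assoc)
  have pw: "(x::'k) [^]\<^bsub>A\<^esub> (n::nat) = of_nat n * x" for x n
    by (induction n) (simp_all add: A_def algebra_simps)
  have h: "(1::'k) [^]\<^bsub>A\<^esub> order A = \<one>\<^bsub>A\<^esub>" by (rule group.pow_order_eq_1[OF grpA]) (simp add: A_def)
  have "of_nat (order A) * (1::'k) = 0" using h unfolding pw by (simp add: A_def)
  moreover have "order A = p" using assms by (simp add: order_def A_def)
  ultimately show ?thesis by simp
qed

lemma of_int_mod_char: assumes "(of_int q :: 'k::field) = 0" shows "(of_int (x mod q) :: 'k) = of_int x"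
proof -
  have "(of_int x :: 'k) = of_int (x div q * q + x mod q)" by simp
  also have "\<dots> = of_int (x div q) * of_int q + of_int (x mod q)" by (simp only: of_int_add of_int_mult)
  also have "\<dots> = of_int (x mod q)" using assms by simp
  finally show ?thesis by simp
qed

lemma Heis_pow3_id: assumes "q > 1" "int r mod q = 1"
  shows "henc (0,0,q-1) [^]\<^bsub>Heis q\<^esub> (r::nat) = henc (0,0,q-1)"
proof -
  have "((q-1) * int r) mod q = ((q-1) * (int r mod q)) mod q" by (simp add: mod_mult_right_eq)
  also have "\<dots> = q - 1" using assms m1q[OF assms(1)] by simp
  finally show ?thesis using Heis_pow3[OF assms(1)] by simp
qed

lemma Heis_pow3_one: assumes "q > 1" "q dvd int r"
  shows "henc (0,0,q-1) [^]\<^bsub>Heis q\<^esub> (r::nat) = \<one>\<^bsub>Heis q\<^esub>"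
  using Heis_pow3[OF assms(1), of r] assms(2) by (simp add: Heis_one)

lemma Heis_pres:
  assumes p: "p > 1" and n1: "n1 \<ge> 1" and n2: "n2 \<ge> 1" and m: "o1' < m" "o2' < m"
    and r1: "r1_of p m o1 mod p = 1" and r2: "r2_of p m o1 o2 mod p = 1"
  shows "pres_rel p m n1 n2 o1 o2 o1' o2' u1 u2 (Heis (int p)) (henc (1,0,0)) (henc (0,1,0))"
proof -
  let ?q = "int p"
  have q: "?q > 1" using p by simp
  have c1: "henc (1,0,0) \<in> carrier (Heis ?q)" "henc (0,1,0) \<in> carrier (Heis ?q)"
    using q by (auto intro!: Heis_carr hT_mem)
  have dv: "p dvd p ^ k" if "k \<ge> 1" for k using that by (simp add: dvd_power)
  have dvi: "?q dvd int (p ^ k)" if "k \<ge> 1" for k unfolding of_nat_power by (rule dvd_power) (use that in auto)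
  have dvi2: "?q dvd int (u * p ^ k)" if "k \<ge> 1" for k u using dvi[OF that] by simp
  have mm: "m - o1' \<ge> 1" "m - o2' \<ge> 1" "m \<ge> 1" using m by auto
  have r1i: "int (r1_of p m o1) mod ?q = 1" using r1 by (metis of_nat_1 of_nat_mod)
  have r2i: "int (r2_of p m o1 o2) mod ?q = 1" using r2 by (metis of_nat_1 of_nat_mod)
  have pw1: "henc (1,0,0) [^]\<^bsub>Heis ?q\<^esub> (p ^ n1) = \<one>\<^bsub>Heis ?q\<^esub>"
    using Heis_pow1[OF q, of "p ^ n1"] dvi[OF n1] by (simp add: Heis_one)
  have pw2: "henc (0,1,0) [^]\<^bsub>Heis ?q\<^esub> (p ^ n2) = \<one>\<^bsub>Heis ?q\<^esub>"
    using Heis_pow2[OF q, of "p ^ n2"] dvi[OF n2] by (simp add: Heis_one)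
  show ?thesis
    unfolding pres_rel_def Let_def Heis_commut[OF q] Heis_conj1[OF q] Heis_conj2[OF q]
    using c1 pw1 pw2 Heis_pow3_id[OF q r1i] Heis_pow3_id[OF q r2i]
      Heis_pow3_one[OF q dvi[OF mm(3)]] Heis_pow3_one[OF q dvi2[OF mm(1)]] Heis_pow3_one[OF q dvi2[OF mm(2)]]
    by simp
qed

lemma r_mod:
  assumes p: "p > 1" and o: "o1 < m" "o2 < m"
  shows "r1_of p m o1 mod p = 1" "r2_of p m o1 o2 mod p = 1"
proof -
  have d: "p dvd p ^ k" if "k \<ge> 1" for k using that by (simp add: dvd_power)
  have a: "(1 + p ^ k) mod p = 1" if "k \<ge> 1" for k
  proof -
    have "p ^ k mod p = 0" using d[OF that] by simp
    then have "(1 + p ^ k) mod p = (1 + 0) mod p" by (metis mod_add_right_eq)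
    then show ?thesis using p by simp
  qed
  show r1: "r1_of p m o1 mod p = 1" unfolding r1_of_def using a o by simp
  show "r2_of p m o1 o2 mod p = 1"
  proof (cases "o2 > o1")
    case True then show ?thesis unfolding r2_of_def using a o by simp
  next
    case False
    have "r1_of p m o1 ^ p ^ (o1 - o2) mod p = (r1_of p m o1 mod p) ^ p ^ (o1 - o2) mod p"
      by (simp add: power_mod)
    then show ?thesis unfolding r2_of_def using False r1 p by simp
  qed
qed


theorem mainTheorem11:
  fixes \<Gamma> :: "('a, 'b) monoid_scheme"
    and p m n1 n2 o1 o2 o1' o2' u1 u2 :: nat
  assumes "Factorial_Ring.prime p" and "odd p"
    and "card (UNIV :: ('k::{field,finite}) set) = p"
    and "is_p_group p \<Gamma>" and "\<not> comm_group \<Gamma>" and "two_generated \<Gamma>"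
    and "cyclic_subgroup \<Gamma> (derived \<Gamma> (carrier \<Gamma>))"
    and "inv_conditions p m n1 n2 o1 o2 o1' o2' u1 u2"
    and "is_presented_by p m n1 n2 o1 o2 o1' o2' u1 u2 \<Gamma>"
    and "o1 \<noteq> o2" and "0 < max o1' o2'" and "max o1' o2' < m" and "n2 \<ge> 2"
  defines "I\<Gamma> \<equiv> (aug_ideal \<Gamma> (carrier \<Gamma>) :: ('a \<Rightarrow> 'k) set)"
    and "I\<Gamma>' \<equiv> (aug_ideal \<Gamma> (derived \<Gamma> (carrier \<Gamma>)) :: ('a \<Rightarrow> 'k) set)"
  defines "A \<equiv> set_mult \<Gamma> I\<Gamma>' (grp_alg \<Gamma>)"
    and "B \<equiv> set_mult \<Gamma> I\<Gamma>' I\<Gamma>"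
    and "D \<equiv> set_mult \<Gamma> (set_mult \<Gamma> I\<Gamma> I\<Gamma>) I\<Gamma>"
  shows "nat_proj_welldef A B D
    \<and> bij_betw (nat_proj A B D) (quot_sp A B) (quot_sp (set_add A D) D)
    \<and> card (quot_sp A B) = p \<and> card (quot_sp (set_add A D) D) = p"

proof -
  have grp: "group \<Gamma>" and fin: "finite (carrier \<Gamma>)" using assms(4) by (auto simp: is_p_group_def)
  interpret G: group \<Gamma> by (rule grp)
  have p1: "p > 1" using assms(1) prime_gt_1_nat by blast
  define q where "q = int p"
  have q: "q > 1" using p1 by (simp add: q_def)
  have charq: "(of_int q :: 'k) = 0" using char_p[OF assms(3)] by (simp add: q_def)
  obtain b1 b2 where pr: "pres_rel p m n1 n2 o1 o2 o1' o2' u1 u2 \<Gamma> b1 b2"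
    and univ: "\<forall>(H :: nat monoid) h1 h2. group H \<and> pres_rel p m n1 n2 o1 o2 o1' o2' u1 u2 H h1 h2
           \<longrightarrow> (\<exists>\<phi>\<in>hom \<Gamma> H. \<phi> b1 = h1 \<and> \<phi> b2 = h2)"
    using assms(9) unfolding is_presented_by_def by blast
  have bc: "b1 \<in> carrier \<Gamma>" "b2 \<in> carrier \<Gamma>" using pr by (auto simp: pres_rel_def)
  have num: "int n1 \<ge> int n2 \<and> int n2 \<ge> 1 \<and> int o1 < min (int m) (int n1) \<and> int o2 < min (int m) (int n2)"
    using assms(8) unfolding inv_conditions_def Let_def by blast
  have o: "o1 < m" "o2 < m" "n1 \<ge> 1" "n2 \<ge> 1" using num by auto
  have o': "o1' < m" "o2' < m" using assms(12) by auto
  have hp: "pres_rel p m n1 n2 o1 o2 o1' o2' u1 u2 (Heis q) (henc (1,0,0)) (henc (0,1,0))"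
    unfolding q_def using Heis_pres[OF p1 o(3) o(4) o' r_mod[OF p1 o(1,2)]] .
  obtain \<phi> where \<phi>: "\<phi> \<in> hom \<Gamma> (Heis q)" "\<phi> b1 = henc (1,0,0)" "\<phi> b2 = henc (0,1,0)"
    using univ Heis_group[OF q] hp by blast
  interpret gh: group_hom \<Gamma> "Heis q" \<phi>
    by (intro group_hom.intro group_hom_axioms.intro grp Heis_group[OF q] \<phi>(1))
  define aG where "aG = commut \<Gamma> b2 b1"
  have aGc: "aG \<in> carrier \<Gamma>" using bc by (simp add: aG_def commut_def)
  have phia: "\<phi> aG = henc (0,0,q-1)"
  proof -
    have "\<phi> aG = commut (Heis q) (\<phi> b2) (\<phi> b1)"
      using bc by (simp add: aG_def commut_def gh.hom_mult gh.hom_inv)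
    then show ?thesis using Heis_commut[OF q] \<phi> by simp
  qed
  have hd: "hdec (s \<otimes>\<^bsub>Heis q\<^esub> t) = hmul q (hdec s) (hdec t)"
    if "s \<in> carrier (Heis q)" "t \<in> carrier (Heis q)" for s t
  proof -
    have "s \<in> henc ` hT q" "t \<in> henc ` hT q" using that by (simp_all add: Heis_def)
    then obtain s' t' where st: "s = henc s'" "s' \<in> hT q" "t = henc t'" "t' \<in> hT q"
      by (meson imageE)
    show ?thesis using st q by (simp add: Heis_mult hdec_henc hdec_henc_hmul)
  qed
  define F :: "'a \<Rightarrow> 'k" where "F g = of_int (snd (snd (hdec (\<phi> g))))" for g
  define Xk :: "'a \<Rightarrow> 'k" where "Xk g = of_int (fst (hdec (\<phi> g)))" for g
  define Yk :: "'a \<Rightarrow> 'k" where "Yk g = of_int (fst (snd (hdec (\<phi> g))))" for g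
  define Dr where "Dr = derived \<Gamma> (carrier \<Gamma>)"
  have hmc: "\<phi> (g \<otimes>\<^bsub>\<Gamma>\<^esub> h) = \<phi> g \<otimes>\<^bsub>Heis q\<^esub> \<phi> h" "\<phi> g \<in> carrier (Heis q)" "\<phi> h \<in> carrier (Heis q)"
    if "g \<in> carrier \<Gamma>" "h \<in> carrier \<Gamma>" for g h
    using that by (auto simp: gh.hom_mult)
  have F1: "F (g \<otimes>\<^bsub>\<Gamma>\<^esub> h) = F g + F h + Xk g * Yk h" and X1: "Xk (g \<otimes>\<^bsub>\<Gamma>\<^esub> h) = Xk g + Xk h"
    if gh: "g \<in> carrier \<Gamma>" "h \<in> carrier \<Gamma>" for g h
  proof -
    obtain x y z where a: "hdec (\<phi> g) = (x,y,z)" by (cases "hdec (\<phi> g)") auto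
    obtain x' y' z' where b: "hdec (\<phi> h) = (x',y',z')" by (cases "hdec (\<phi> h)") auto
    have e: "hdec (\<phi> (g \<otimes>\<^bsub>\<Gamma>\<^esub> h)) = ((x+x') mod q, (y+y') mod q, (z+z'+x*y') mod q)"
      using hmc[OF gh] hd a b by (simp add: hmul_def)
    show "F (g \<otimes>\<^bsub>\<Gamma>\<^esub> h) = F g + F h + Xk g * Yk h"
      unfolding F_def Xk_def Yk_def using e a b of_int_mod_char[OF charq] by simp
    show "Xk (g \<otimes>\<^bsub>\<Gamma>\<^esub> h) = Xk g + Xk h"
      unfolding Xk_def using e a b of_int_mod_char[OF charq] by simp
  qed
  have XH: "Xk c = 0" if "c \<in> Dr" for c
    using X_derived[OF grp X1] that unfolding Dr_def by blast
  have Dsub: "Dr \<subseteq> carrier \<Gamma>" unfolding Dr_def by (rule G.derived_in_carrier) simp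
  have sg: "subgroup Dr \<Gamma>" unfolding Dr_def by (rule G.derived_is_subgroup) simp
  have finD: "finite Dr" using finite_subset[OF Dsub fin] .
  have oneD: "\<one>\<^bsub>\<Gamma>\<^esub> \<in> Dr" using subgroup.one_closed[OF sg] .
  interpret qf: quadf \<Gamma> F Xk Yk Dr
    by (unfold_locales) (auto simp: grp fin Dsub F1 X1 XH)
  have h0: "hdec (henc (0,0,0)) = (0,0,0)" using q by (intro hdec_henc[where p=q]) (simp add: hT_def)
  have F1': "F \<one>\<^bsub>\<Gamma>\<^esub> = 0"
    using h0 by (simp add: F_def Heis_one)
  have Fa: "F aG = -1"
  proof -
    have "hdec (henc (0,0,q-1)) = (0,0,q-1)" using q by (intro hdec_henc[where p=q]) (simp add: hT_def)
    then have "F aG = of_int (q - 1)" by (simp add: F_def phia)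
    also have "\<dots> = -1" using charq by simp
    finally show ?thesis .
  qed
  have aD: "aG \<in> Dr"
  proof -
    have eqa: "aG = inv\<^bsub>\<Gamma>\<^esub> b2 \<otimes>\<^bsub>\<Gamma>\<^esub> inv\<^bsub>\<Gamma>\<^esub> b1 \<otimes>\<^bsub>\<Gamma>\<^esub> inv\<^bsub>\<Gamma>\<^esub> (inv\<^bsub>\<Gamma>\<^esub> b2) \<otimes>\<^bsub>\<Gamma>\<^esub> inv\<^bsub>\<Gamma>\<^esub> (inv\<^bsub>\<Gamma>\<^esub> b1)"
      using bc by (simp add: aG_def commut_def)
    have "inv\<^bsub>\<Gamma>\<^esub> b2 \<otimes>\<^bsub>\<Gamma>\<^esub> inv\<^bsub>\<Gamma>\<^esub> b1 \<otimes>\<^bsub>\<Gamma>\<^esub> inv\<^bsub>\<Gamma>\<^esub> (inv\<^bsub>\<Gamma>\<^esub> b2) \<otimes>\<^bsub>\<Gamma>\<^esub> inv\<^bsub>\<Gamma>\<^esub> (inv\<^bsub>\<Gamma>\<^esub> b1) \<in> derived_set \<Gamma> (carrier \<Gamma>)"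
      apply (rule UN_I[where a="inv\<^bsub>\<Gamma>\<^esub> b2"])
       apply (simp add: bc)
      apply (rule UN_I[where a="inv\<^bsub>\<Gamma>\<^esub> b1"])
       apply (simp add: bc)
      by simp
    then have "aG \<in> derived_set \<Gamma> (carrier \<Gamma>)" unfolding eqa .
    then show ?thesis unfolding Dr_def derived_def by (rule generate.incl)
  qed
  obtain g where g: "g \<in> Dr" "Dr = generate \<Gamma> {g}"
    using assms(7) unfolding cyclic_subgroup_def Dr_def by blast
  define e :: "'a \<Rightarrow> 'k" where "e = d2 g \<one>\<^bsub>\<Gamma>\<^esub>"
  have IG: "I\<Gamma> = AI \<Gamma>" and IG': "I\<Gamma>' = aug_ideal \<Gamma> Dr" using assms(14,15) by (simp_all add: Dr_def)
  have Bdef: "B = set_mult \<Gamma> (aug_ideal \<Gamma> Dr) (AI \<Gamma>)" using assms(17) IG IG' by simp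
  have Adef: "A = set_mult \<Gamma> (aug_ideal \<Gamma> Dr) (grp_alg \<Gamma>)" using assms(16) IG' by simp
  have Ddef: "D = set_mult \<Gamma> (set_mult \<Gamma> (AI \<Gamma>) (AI \<Gamma>)) (AI \<Gamma>)" using assms(18) IG by simp
  have ssA: "subsp A" unfolding Adef by (rule subsp_sm[OF subsp_grp_alg])
  have ssB: "subsp B" unfolding Bdef by (rule subsp_sm[OF subsp_aug])
  have ssD: "subsp D" unfolding Ddef by (rule subsp_sm[OF subsp_aug])
  have ssAD: "subsp (set_add A D)" by (rule subsp_set_add[OF ssA ssD])
  have BD: "B \<subseteq> D" unfolding Bdef Ddef using I'_sub_SM[OF grp fin] unfolding Dr_def by (rule sm_mono)
  have LB: "LF \<Gamma> F u = 0" if "u \<in> B" for u using qf.LF_Bset that unfolding Bdef by blast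
  have LD: "LF \<Gamma> F u = 0" if "u \<in> D" for u using qf.LF_Dset that unfolding Ddef by blast
  have spanA: "\<exists>r. (\<lambda>t. v t - r * e t) \<in> B" if "v \<in> A" for v
    using span_A[OF grp fin g(2)[unfolded Dr_def] g(1)[unfolded Dr_def]] that unfolding Adef Bdef e_def Dr_def by blast
  have eI': "e \<in> aug_ideal \<Gamma> Dr" unfolding e_def using finD g(1) oneD Dsub by (rule d2_aug)
  have eA: "e \<in> A"
  proof -
    have "ga_mult \<Gamma> e (dl \<one>\<^bsub>\<Gamma>\<^esub>) \<in> A" unfolding Adef using eI' dl_grp_alg[OF G.one_closed] by (rule sm_single)
    moreover have "ga_mult \<Gamma> e (dl \<one>\<^bsub>\<Gamma>\<^esub>) = e" using eI' by (intro ga_mult_dl1[OF grp fin]) (simp add: aug_ideal_def)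
    ultimately show ?thesis by simp
  qed
  have ceA: "(\<lambda>t. c * e t) \<in> A" for c using subspD(3)[OF ssA eA] .
  have Le: "LF \<Gamma> F e \<noteq> 0"
  proof
    assume L0: "LF \<Gamma> F e = 0"
    have aI': "(d2 aG \<one>\<^bsub>\<Gamma>\<^esub> :: 'a \<Rightarrow> 'k) \<in> aug_ideal \<Gamma> Dr" using finD aD oneD Dsub by (rule d2_aug)
    obtain r where r: "(\<lambda>t. d2 aG \<one>\<^bsub>\<Gamma>\<^esub> t - r * e t) \<in> B"
      using span_I'[OF grp fin g(2)[unfolded Dr_def] g(1)[unfolded Dr_def]] aI' unfolding Bdef e_def Dr_def by blast
    have "LF \<Gamma> F (d2 aG \<one>\<^bsub>\<Gamma>\<^esub>) = -1"
    proof -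
      have "LF \<Gamma> F (d2 aG \<one>\<^bsub>\<Gamma>\<^esub>) = (\<Sum>x\<in>carrier \<Gamma>. dl aG x * F x) - (\<Sum>x\<in>carrier \<Gamma>. dl \<one>\<^bsub>\<Gamma>\<^esub> x * F x)"
        by (simp add: LF_def d2_def left_diff_distrib sum_subtractf)
      also have "\<dots> = F aG - F \<one>\<^bsub>\<Gamma>\<^esub>" using sum_dl[OF fin aGc, of F] sum_dl[OF fin G.one_closed, of F] by simp
      finally show ?thesis using Fa F1' by simp
    qed
    moreover have "LF \<Gamma> F (\<lambda>t. d2 aG \<one>\<^bsub>\<Gamma>\<^esub> t - r * e t) = LF \<Gamma> F (d2 aG \<one>\<^bsub>\<Gamma>\<^esub>) - r * LF \<Gamma> F e"
      by (simp add: LF_diff LF_scale)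
    ultimately have "LF \<Gamma> F (\<lambda>t. d2 aG \<one>\<^bsub>\<Gamma>\<^esub> t - r * e t) = -1" using L0 by simp
    then show False using LB[OF r] by simp
  qed
  have Ldiff: "LF \<Gamma> F (\<lambda>t. c * e t - c' * e t) = (c - c') * LF \<Gamma> F e" for c c'
    by (simp add: LF_diff LF_scale algebra_simps)
  define \<psi> where "\<psi> c = coset_of (\<lambda>t. c * e t) B" for c
  define \<chi> where "\<chi> c = coset_of (\<lambda>t. c * e t) D" for c
  have inj\<psi>: "inj \<psi>"
  proof (rule injI)
    fix c c' assume "\<psi> c = \<psi> c'"
    then have "(\<lambda>t. c * e t - c' * e t) \<in> B" unfolding \<psi>_def by (rule iffD1[OF coset_eq[OF ssB]])
    then have "(c - c') * LF \<Gamma> F e = 0" using LB Ldiff by metis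
    then show "c = c'" using Le by simp
  qed
  have inj\<chi>: "inj \<chi>"
  proof (rule injI)
    fix c c' assume "\<chi> c = \<chi> c'"
    then have "(\<lambda>t. c * e t - c' * e t) \<in> D" unfolding \<chi>_def by (rule iffD1[OF coset_eq[OF ssD]])
    then have "(c - c') * LF \<Gamma> F e = 0" using LD Ldiff by metis
    then show "c = c'" using Le by simp
  qed
  have QAB: "quot_sp A B = range \<psi>"
  proof
    show "quot_sp A B \<subseteq> range \<psi>"
    proof
      fix Y assume "Y \<in> quot_sp A B"
      then obtain v where v: "v \<in> A" "Y = coset_of v B" by (auto simp: quot_sp_def)
      obtain r where "(\<lambda>t. v t - r * e t) \<in> B" using spanA[OF v(1)] by blast
      then have "coset_of v B = \<psi> r" unfolding \<psi>_def by (rule iffD2[OF coset_eq[OF ssB]])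
      then show "Y \<in> range \<psi>" using v by simp
    qed
    show "range \<psi> \<subseteq> quot_sp A B" using ceA by (auto simp: quot_sp_def \<psi>_def)
  qed
  have ceAD: "(\<lambda>t. c * e t) \<in> set_add A D" for c
  proof -
    have "(\<lambda>t. c * e t) = (\<lambda>t. c * e t + (\<lambda>_. 0) t)" by simp
    then show ?thesis unfolding set_add_iff
      by (intro exI[of _ "\<lambda>t. c * e t"] exI[of _ "\<lambda>_. 0"] conjI ceA subspD(1)[OF ssD])
  qed
  have QAD: "quot_sp (set_add A D) D = range \<chi>"
  proof
    show "quot_sp (set_add A D) D \<subseteq> range \<chi>"
    proof
      fix Y assume "Y \<in> quot_sp (set_add A D) D"
      then obtain w where w: "w \<in> set_add A D" "Y = coset_of w D" by (auto simp: quot_sp_def)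
      then obtain v d where vd: "w = (\<lambda>t. v t + d t)" "v \<in> A" "d \<in> D" unfolding set_add_iff by blast
      obtain r where r: "(\<lambda>t. v t - r * e t) \<in> B" using spanA[OF vd(2)] by blast
      have "(\<lambda>t. (v t - r * e t) + d t) \<in> D" using subspD(2)[OF ssD subsetD[OF BD r] vd(3)] .
      moreover have "(\<lambda>t. (v t - r * e t) + d t) = (\<lambda>t. w t - r * e t)" using vd(1) by (simp add: algebra_simps)
      ultimately have "(\<lambda>t. w t - r * e t) \<in> D" by simp
      then have "coset_of w D = \<chi> r" unfolding \<chi>_def by (rule iffD2[OF coset_eq[OF ssD]])
      then show "Y \<in> range \<chi>" using w by simp
    qed
    show "range \<chi> \<subseteq> quot_sp (set_add A D) D" using ceAD by (auto simp: quot_sp_def \<chi>_def)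
  qed
  have wd: "nat_proj_welldef A B D"
    unfolding nat_proj_welldef_def
  proof (intro ballI impI)
    fix x y assume "x \<in> A" "y \<in> A" and cxy: "coset_of x B = coset_of y B"
    from cxy have "(\<lambda>t. x t - y t) \<in> B" by (rule iffD1[OF coset_eq[OF ssB]])
    then have "(\<lambda>t. x t - y t) \<in> D" using BD by blast
    then show "coset_of x D = coset_of y D" by (rule iffD2[OF coset_eq[OF ssD]])
  qed
  have np: "nat_proj A B D (\<psi> c) = \<chi> c" for c
  proof -
    let ?z = "SOME z. z \<in> A \<and> \<psi> c = coset_of z B"
    have "\<exists>z. z \<in> A \<and> \<psi> c = coset_of z B" using ceA unfolding \<psi>_def by blast
    then have "?z \<in> A \<and> \<psi> c = coset_of ?z B" by (rule someI_ex)
    then have z: "?z \<in> A" "\<psi> c = coset_of ?z B" by auto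
    have "(\<lambda>t. ?z t - c * e t) \<in> B" using z(2)[symmetric] unfolding \<psi>_def by (rule iffD1[OF coset_eq[OF ssB]])
    then have "(\<lambda>t. ?z t - c * e t) \<in> D" using BD by blast
    then have "coset_of ?z D = \<chi> c" unfolding \<chi>_def by (rule iffD2[OF coset_eq[OF ssD]])
    then show ?thesis unfolding nat_proj_def by simp
  qed
  have bij: "bij_betw (nat_proj A B D) (quot_sp A B) (quot_sp (set_add A D) D)"
    unfolding bij_betw_def QAB QAD
  proof
    show "inj_on (nat_proj A B D) (range \<psi>)"
    proof (rule inj_onI)
      fix Y Y' assume "Y \<in> range \<psi>" "Y' \<in> range \<psi>" "nat_proj A B D Y = nat_proj A B D Y'"
      then obtain c c' where "Y = \<psi> c" "Y' = \<psi> c'" "\<chi> c = \<chi> c'" using np by auto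
      then show "Y = Y'" using inj\<chi> by (simp add: inj_eq)
    qed
    show "nat_proj A B D ` range \<psi> = range \<chi>" using np by (auto simp: image_iff)
  qed
  have cardk: "card (UNIV :: 'k set) = p" using assms(3) .
  have c1: "card (quot_sp A B) = p" unfolding QAB using card_image[OF inj\<psi>] cardk by simp
  have c2: "card (quot_sp (set_add A D) D) = p" unfolding QAD using card_image[OF inj\<chi>] cardk by simp
  show ?thesis using wd bij c1 c2 by blast
qed


end
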